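(* Let $G$ be one of the groups $\mathrm{GU}_{2n}(q)$, $\mathrm{GU}_{2n+1}(q)$, $\mathrm{SO}_{2n+1}(q)$, $\mathrm{Sp}_{2n}(q)$ with $n\ge1$, viewed as a finite group with split $BN$-pair as described in the context. Let $L$ and $M$ be pure Levi subgroups of $G$ and let $x\in N$. Then $xLx^{-1}\cap M$ is a pure Levi subgroup of $G$.
   Context: Let $q$ be a power of a prime $p$. For $n\ge1$ the groups $G=\mathrm{GU}_{2n}(q)$, $\mathrm{GU}_{2n+1}(q)$, $\mathrm{SO}_{2n+1}(q)$, $\mathrm{Sp}_{2n}(q)$ have a natural split $BN$-pair of characteristic $p$ whose Weyl group $W=N/(B\cap N)$ is of type $B_n$, with simple reflections $S=\{s_1,\dots,s_n\}$ numbered so that $s_1,s_2$ are joined by the double edge of the Coxeter diagram and $s_i,s_{i+1}$ by a simple edge for $i\ge2$. For $I\subseteq S$ let $L_I$ denote the corresponding standard Levi subgroup. A subset $I\subseteq S$ is left connected if $I=\{s_1,\dots,s_r\}$ for some $0\le r\le n$. A Levi subgroup $L$ of $G$ is called pure if it is conjugate under $N$ to a standard Levi subgroup $L_I$ with $I$ left connected. *)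

theory Defs
  imports "Jordan_Normal_Form.Matrix" "Jordan_Normal_Form.Determinant"
begin

text \<open>For the unitary groups the matrix entries lie in a field
  with q^2 elements and the field involution is a \<mapsto> a^q.\<close>

datatype ctype = GU_even | GU_odd | SO_odd | Sp_even

fun cdim :: "ctype \<Rightarrow> nat \<Rightarrow> nat" where
  "cdim GU_even n = 2 * n"
| "cdim GU_odd n = 2 * n + 1"
| "cdim SO_odd n = 2 * n + 1"
| "cdim Sp_even n = 2 * n"

definition antidiag_one :: "nat \<Rightarrow> 'k::field mat" where
  "antidiag_one m = mat m m (\<lambda>(i,j). if i + j = m - 1 then 1 else 0)"

definition symp_form :: "nat \<Rightarrow> 'k::field mat" where
  "symp_form n = mat (2*n) (2*n)
     (\<lambda>(i,j). if i + j = 2*n - 1 then (if i < n then 1 else -1) else 0)"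

definition qform :: "nat \<Rightarrow> 'k::field vec \<Rightarrow> 'k" where
  "qform n v = (\<Sum>i<n. v $ i * v $ (2*n - i)) + v $ n * v $ n"

definition conj_transp :: "nat \<Rightarrow> 'k::field mat \<Rightarrow> 'k mat" where
  "conj_transp q A = transpose_mat (map_mat (\<lambda>a. a ^ q) A)"

fun classical_group :: "ctype \<Rightarrow> nat \<Rightarrow> nat \<Rightarrow> 'k::field mat set" where
  "classical_group GU_even n q =
     {A \<in> carrier_mat (2*n) (2*n). conj_transp q A * antidiag_one (2*n) * A = antidiag_one (2*n)}"
| "classical_group GU_odd n q =
     {A \<in> carrier_mat (2*n+1) (2*n+1).
        conj_transp q A * antidiag_one (2*n+1) * A = antidiag_one (2*n+1)}"
| "classical_group SO_odd n q =
     {A \<in> carrier_mat (2*n+1) (2*n+1). det A = 1 \<and>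
        (\<forall>v \<in> carrier_vec (2*n+1). qform n (A *\<^sub>v v) = qform n v)}"
| "classical_group Sp_even n q =
     {A \<in> carrier_mat (2*n) (2*n). transpose_mat A * symp_form n * A = symp_form n}"

definition monomial_mat :: "nat \<Rightarrow> 'k::field mat \<Rightarrow> bool" where
  "monomial_mat m A \<longleftrightarrow> A \<in> carrier_mat m m \<and>
     (\<forall>i<m. \<exists>!j. j < m \<and> A $$ (i,j) \<noteq> 0) \<and>
     (\<forall>j<m. \<exists>!i. i < m \<and> A $$ (i,j) \<noteq> 0)"

text \<open>The group N of the natural split BN-pair: the monomial matrices in G
  (normaliser of the diagonal torus T = B \<inter> N; B = upper triangular matrices in G).\<close>
definition Ngrp :: "ctype \<Rightarrow> nat \<Rightarrow> nat \<Rightarrow> 'k::field mat set" where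
  "Ngrp ty n q = {A \<in> classical_group ty n q. monomial_mat (cdim ty n) A}"

text \<open>Standard Levi subgroup L_I for the left connected I = {s_1,...,s_r}.
  With the ordering of the basis used above (Borel = upper triangular), s_1 is the node
  of the double edge (corresponding to the middle block), and L_I consists of the
  elements of G that are diagonal on the first and last n - r coordinates and arbitrary
  on the central block of size m - 2(n-r).\<close>
definition std_levi :: "ctype \<Rightarrow> nat \<Rightarrow> nat \<Rightarrow> nat \<Rightarrow> 'k::field mat set" where
  "std_levi ty n q r = {A \<in> classical_group ty n q.
     \<forall>i < cdim ty n. \<forall>j < cdim ty n.
       i \<noteq> j \<and> (i < n - r \<or> j < n - r \<or> cdim ty n - (n - r) \<le> i \<or> cdim ty n - (n - r) \<le> j)
       \<longrightarrow> A $$ (i,j) = 0}"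

definition conj_set :: "nat \<Rightarrow> 'k::field mat \<Rightarrow> 'k mat set \<Rightarrow> 'k mat set" where
  "conj_set m x H = {x * h * y | h y. h \<in> H \<and> y \<in> carrier_mat m m \<and> x * y = 1\<^sub>m m}"

definition pure_levi :: "ctype \<Rightarrow> nat \<Rightarrow> nat \<Rightarrow> 'k::field mat set \<Rightarrow> bool" where
  "pure_levi ty n q L \<longleftrightarrow>
     (\<exists>x \<in> Ngrp ty n q. \<exists>r \<le> n. L = conj_set (cdim ty n) x (std_levi ty n q r))"

end

theory Submission
  imports Defs
begin


definition cpm :: "nat \<Rightarrow> 'k::field mat \<Rightarrow> nat \<Rightarrow> nat" where
  "cpm m w j = (THE i. i < m \<and> w $$ (i,j) \<noteq> 0)"
definition rpm :: "nat \<Rightarrow> 'k::field mat \<Rightarrow> nat \<Rightarrow> nat" where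
  "rpm m w i = (THE j. j < m \<and> w $$ (i,j) \<noteq> 0)"

lemma cpm: assumes "monomial_mat m w" "j < m"
  shows "cpm m w j < m" "w $$ (cpm m w j, j) \<noteq> 0"
proof -
  have "\<forall>j<m. \<exists>!i. i < m \<and> w $$ (i,j) \<noteq> 0" using assms(1) unfolding monomial_mat_def by (elim conjE)
  hence "\<exists>!i. i < m \<and> w $$ (i,j) \<noteq> 0" using assms(2) by simp
  from theI'[OF this] have t: "cpm m w j < m \<and> w $$ (cpm m w j, j) \<noteq> 0" unfolding cpm_def .
  thus "cpm m w j < m" "w $$ (cpm m w j, j) \<noteq> 0" by blast+
qed

lemma rpm: assumes "monomial_mat m w" "i < m"
  shows "rpm m w i < m" "w $$ (i, rpm m w i) \<noteq> 0"
proof -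
  have "\<forall>i<m. \<exists>!j. j < m \<and> w $$ (i,j) \<noteq> 0" using assms(1) unfolding monomial_mat_def by (elim conjE)
  hence "\<exists>!j. j < m \<and> w $$ (i,j) \<noteq> 0" using assms(2) by simp
  from theI'[OF this] have t: "rpm m w i < m \<and> w $$ (i, rpm m w i) \<noteq> 0" unfolding rpm_def .
  thus "rpm m w i < m" "w $$ (i, rpm m w i) \<noteq> 0" by blast+
qed

lemma cpm_eq: assumes "monomial_mat m w" "i < m" "j < m" "w $$ (i,j) \<noteq> 0"
  shows "cpm m w j = i"
proof -
  have "\<forall>j<m. \<exists>!i. i < m \<and> w $$ (i,j) \<noteq> 0" using assms(1) unfolding monomial_mat_def by (elim conjE)
  hence "\<exists>!i. i < m \<and> w $$ (i,j) \<noteq> 0" using assms(3) by simp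
  then show ?thesis unfolding cpm_def using assms by (auto intro!: the1_equality)
qed

lemma rpm_eq: assumes "monomial_mat m w" "i < m" "j < m" "w $$ (i,j) \<noteq> 0"
  shows "rpm m w i = j"
proof -
  have "\<forall>i<m. \<exists>!j. j < m \<and> w $$ (i,j) \<noteq> 0" using assms(1) unfolding monomial_mat_def by (elim conjE)
  hence "\<exists>!j. j < m \<and> w $$ (i,j) \<noteq> 0" using assms(2) by simp
  then show ?thesis unfolding rpm_def using assms by (auto intro!: the1_equality)
qed

lemma mono_zero: assumes "monomial_mat m w" "i < m" "j < m" "i \<noteq> cpm m w j"
  shows "w $$ (i,j) = 0"
  using cpm_eq[OF assms(1-3)] assms(4) by auto

lemma mono_zero': assumes "monomial_mat m w" "i < m" "j < m" "j \<noteq> rpm m w i"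
  shows "w $$ (i,j) = 0"
  using rpm_eq[OF assms(1-3)] assms(4) by auto

lemma rpm_cpm: "monomial_mat m w \<Longrightarrow> j < m \<Longrightarrow> rpm m w (cpm m w j) = j"
  by (simp add: cpm rpm_eq)
lemma cpm_rpm: "monomial_mat m w \<Longrightarrow> i < m \<Longrightarrow> cpm m w (rpm m w i) = i"
  by (simp add: rpm cpm_eq)

lemma mono_carrier: "monomial_mat m w \<Longrightarrow> w \<in> carrier_mat m m"
  unfolding monomial_mat_def by auto

lemma sum_single: fixes k0 m :: nat assumes "k0 < m" "\<And>k. k < m \<Longrightarrow> k \<noteq> k0 \<Longrightarrow> g k = 0"
  shows "(\<Sum>k\<in>{0..<m}. g k) = g k0"
proof -
  have "(\<Sum>k\<in>{0..<m}. g k) = g k0 + (\<Sum>k\<in>{0..<m}-{k0}. g k)"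
    by (rule sum.remove, insert assms, auto)
  also have "(\<Sum>k\<in>{0..<m}-{k0}. g k) = 0" by (rule sum.neutral, insert assms, auto)
  finally show ?thesis by simp
qed

lemma mult_right: assumes "monomial_mat m w" "dim_col A = m" "i < dim_row A" "j < m"
  shows "(A * w) $$ (i,j) = A $$ (i, cpm m w j) * w $$ (cpm m w j, j)"
proof -
  have w: "w \<in> carrier_mat m m" using mono_carrier[OF assms(1)] .
  have "(A * w) $$ (i,j) = (\<Sum>k\<in>{0..<m}. A $$ (i,k) * w $$ (k,j))"
    using assms w by (simp add: scalar_prod_def)
  also have "\<dots> = A $$ (i, cpm m w j) * w $$ (cpm m w j, j)"
    by (rule sum_single, insert assms cpm[OF assms(1)] mono_zero[OF assms(1)], auto)
  finally show ?thesis .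
qed

lemma mult_left: assumes "monomial_mat m w" "dim_row A = m" "i < m" "j < dim_col A"
  shows "(w * A) $$ (i,j) = w $$ (i, rpm m w i) * A $$ (rpm m w i, j)"
proof -
  have w: "w \<in> carrier_mat m m" using mono_carrier[OF assms(1)] .
  have "(w * A) $$ (i,j) = (\<Sum>k\<in>{0..<m}. w $$ (i,k) * A $$ (k,j))"
    using assms w by (simp add: scalar_prod_def)
  also have "\<dots> = w $$ (i, rpm m w i) * A $$ (rpm m w i, j)"
    by (rule sum_single, insert assms rpm[OF assms(1)] mono_zero'[OF assms(1)], auto)
  finally show ?thesis .
qed

lemma mult_vec: assumes "monomial_mat m w" "v \<in> carrier_vec m" "i < m"
  shows "(w *\<^sub>v v) $ i = w $$ (i, rpm m w i) * v $ rpm m w i"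
proof -
  have w: "w \<in> carrier_mat m m" using mono_carrier[OF assms(1)] .
  have "(w *\<^sub>v v) $ i = (\<Sum>k\<in>{0..<m}. w $$ (i,k) * v $ k)"
    using assms w by (simp add: scalar_prod_def)
  also have "\<dots> = w $$ (i, rpm m w i) * v $ rpm m w i"
    by (rule sum_single, insert assms rpm[OF assms(1)] mono_zero'[OF assms(1)], auto)
  finally show ?thesis .
qed

definition winv :: "nat \<Rightarrow> 'k::field mat \<Rightarrow> 'k mat" where
  "winv m w = mat m m (\<lambda>(i,j). if w $$ (j,i) \<noteq> 0 then inverse (w $$ (j,i)) else 0)"

lemma winv_index: "i < m \<Longrightarrow> j < m \<Longrightarrow> winv m w $$ (i,j) = (if w $$ (j,i) \<noteq> 0 then inverse (w $$ (j,i)) else 0)"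
  "winv m w \<in> carrier_mat m m"
  unfolding winv_def by auto

lemma winv_nz: "i < m \<Longrightarrow> j < m \<Longrightarrow> (winv m w $$ (i,j) \<noteq> 0) = (w $$ (j,i) \<noteq> 0)"
  by (simp add: winv_index)

lemma winv_mono: assumes "monomial_mat m w" shows "monomial_mat m (winv m w)"
proof -
  have a: "\<forall>j<m. \<exists>!i. i < m \<and> w $$ (i, j) \<noteq> 0"
   and b: "\<forall>i<m. \<exists>!j. j < m \<and> w $$ (i, j) \<noteq> 0" using assms unfolding monomial_mat_def by auto
  have c: "\<forall>i<m. \<exists>!j. j < m \<and> winv m w $$ (i, j) \<noteq> 0"
  proof (intro allI impI)
    fix i assume i: "i < m"
    have e: "(\<lambda>j. j < m \<and> winv m w $$ (i, j) \<noteq> 0) = (\<lambda>j. j < m \<and> w $$ (j, i) \<noteq> 0)"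
      using i by (intro ext) (metis winv_nz)
    show "\<exists>!j. j < m \<and> winv m w $$ (i, j) \<noteq> 0" unfolding e using a i by blast
  qed
  have d: "\<forall>j<m. \<exists>!i. i < m \<and> winv m w $$ (i, j) \<noteq> 0"
  proof (intro allI impI)
    fix j assume j: "j < m"
    have e: "(\<lambda>i. i < m \<and> winv m w $$ (i, j) \<noteq> 0) = (\<lambda>i. i < m \<and> w $$ (j, i) \<noteq> 0)"
      using j by (intro ext) (metis winv_nz)
    show "\<exists>!i. i < m \<and> winv m w $$ (i, j) \<noteq> 0" unfolding e using b j by blast
  qed
  show ?thesis unfolding monomial_mat_def using c d winv_index(2) by blast
qed

lemma cpm_winv: "monomial_mat m w \<Longrightarrow> j < m \<Longrightarrow> cpm m (winv m w) j = rpm m w j"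
proof -
  assume a: "monomial_mat m w" "j < m"
  show ?thesis by (rule cpm_eq[OF winv_mono[OF a(1)] rpm(1)[OF a] a(2)], unfold winv_nz[OF rpm(1)[OF a] a(2)], rule rpm(2)[OF a])
qed
lemma rpm_winv: "monomial_mat m w \<Longrightarrow> i < m \<Longrightarrow> rpm m (winv m w) i = cpm m w i"
proof -
  assume a: "monomial_mat m w" "i < m"
  show ?thesis by (rule rpm_eq[OF winv_mono[OF a(1)] a(2) cpm(1)[OF a]], unfold winv_nz[OF a(2) cpm(1)[OF a]], rule cpm(2)[OF a])
qed

lemma w_winv: assumes "monomial_mat m w" shows "w * winv m w = 1\<^sub>m m"
proof (rule eq_matI)
  fix i j assume ij: "i < dim_row (1\<^sub>m m :: 'a mat)" "j < dim_col (1\<^sub>m m :: 'a mat)"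
  hence ij: "i < m" "j < m" by auto
  have "(w * winv m w) $$ (i,j) = w $$ (i, rpm m w i) * winv m w $$ (rpm m w i, j)"
    by (rule mult_left[OF assms], insert ij winv_index(2)[of m w], auto)
  also have "\<dots> = (if i = j then 1 else 0)"
  proof (cases "i = j")
    case True thus ?thesis using rpm[OF assms ij(1)] ij by (simp add: winv_index)
  next
    case False
    have "w $$ (j, rpm m w i) = 0"
      using False rpm[OF assms ij(1)] ij rpm_eq[OF assms] by (metis cpm_rpm[OF assms])
    thus ?thesis using False rpm[OF assms ij(1)] ij by (simp add: winv_index)
  qed
  finally show "(w * winv m w) $$ (i,j) = 1\<^sub>m m $$ (i,j)" using ij by simp
next
  show "dim_row (w * winv m w) = dim_row (1\<^sub>m m :: 'a mat)" using mono_carrier[OF assms] by simp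
next
  show "dim_col (w * winv m w) = dim_col (1\<^sub>m m :: 'a mat)" by (simp add: winv_def)
qed

lemma winv_w: assumes "monomial_mat m w" shows "winv m w * w = 1\<^sub>m m"
proof (rule eq_matI)
  fix i j assume ij: "i < dim_row (1\<^sub>m m :: 'a mat)" "j < dim_col (1\<^sub>m m :: 'a mat)"
  hence ij: "i < m" "j < m" by auto
  have "(winv m w * w) $$ (i,j) = winv m w $$ (i, cpm m w i) * w $$ (cpm m w i, j)"
    using mult_left[OF winv_mono[OF assms], of w i j] ij mono_carrier[OF assms]
    by (simp add: rpm_winv[OF assms])
  also have "\<dots> = (if i = j then 1 else 0)"
  proof (cases "i = j")
    case True thus ?thesis using cpm[OF assms ij(1)] ij by (simp add: winv_index)
  next
    case False
    have "w $$ (cpm m w i, j) = 0"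
      using False cpm[OF assms ij(1)] ij cpm_eq[OF assms] by (metis rpm_cpm[OF assms] rpm_eq[OF assms])
    thus ?thesis using False by simp
  qed
  finally show "(winv m w * w) $$ (i,j) = 1\<^sub>m m $$ (i,j)" using ij by simp
next
  show "dim_row (winv m w * w) = dim_row (1\<^sub>m m :: 'a mat)" by (simp add: winv_def)
next
  show "dim_col (winv m w * w) = dim_col (1\<^sub>m m :: 'a mat)" using mono_carrier[OF assms] by simp
qed

lemma inv_unique: assumes "monomial_mat m w" "y \<in> carrier_mat m m" "w * y = 1\<^sub>m m"
  shows "y = winv m w"
proof -
  have w: "w \<in> carrier_mat m m" using mono_carrier[OF assms(1)] .
  have "y = (winv m w * w) * y" using winv_w[OF assms(1)] assms(2) by simp
  also have "\<dots> = winv m w * (w * y)" using w assms(2) winv_index(2) by (metis assoc_mult_mat)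
  also have "\<dots> = winv m w" using assms(3) right_mult_one_mat[OF winv_index(2)[of m w]] by simp
  finally show ?thesis .
qed



definition Lev :: "'k::field mat set \<Rightarrow> nat \<Rightarrow> nat set \<Rightarrow> 'k mat set" where
  "Lev G m S = {A \<in> G. \<forall>i<m. \<forall>j<m. i \<noteq> j \<and> (i \<notin> S \<or> j \<notin> S) \<longrightarrow> A $$ (i,j) = 0}"

lemma Lev_inter: "Lev G m S \<inter> Lev G m T = Lev G m (S \<inter> T)"
  unfolding Lev_def by blast

lemma conj_entry: assumes w: "monomial_mat m w" and h: "h \<in> carrier_mat m m" and ij: "i < m" "j < m"
  shows "(w * h * winv m w) $$ (i,j) = w $$ (i, rpm m w i) * h $$ (rpm m w i, rpm m w j) * winv m w $$ (rpm m w j, j)"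
proof -
  have wc: "w \<in> carrier_mat m m" using mono_carrier[OF w] .
  have "(w * h * winv m w) $$ (i,j) = (w * h) $$ (i, cpm m (winv m w) j) * winv m w $$ (cpm m (winv m w) j, j)"
    by (rule mult_right[OF winv_mono[OF w]], insert wc h ij, auto)
  also have "cpm m (winv m w) j = rpm m w j" using cpm_winv[OF w ij(2)] .
  also have "(w * h) $$ (i, rpm m w j) = w $$ (i, rpm m w i) * h $$ (rpm m w i, rpm m w j)"
    by (rule mult_left[OF w], insert wc h ij rpm[OF w ij(2)], auto)
  finally show ?thesis .
qed

lemma conj_entry': assumes w: "monomial_mat m w" and h: "h \<in> carrier_mat m m" and ij: "i < m" "j < m"
  shows "(winv m w * h * w) $$ (i,j) = winv m w $$ (i, cpm m w i) * h $$ (cpm m w i, cpm m w j) * w $$ (cpm m w j, j)"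
proof -
  have wc: "w \<in> carrier_mat m m" using mono_carrier[OF w] .
  have wi: "winv m w \<in> carrier_mat m m" by (rule winv_index(2))
  have "(winv m w * h * w) $$ (i,j) = (winv m w * h) $$ (i, cpm m w j) * w $$ (cpm m w j, j)"
    by (rule mult_right[OF w], insert wi h ij, auto)
  also have "(winv m w * h) $$ (i, cpm m w j) = winv m w $$ (i, rpm m (winv m w) i) * h $$ (rpm m (winv m w) i, cpm m w j)"
    by (rule mult_left[OF winv_mono[OF w]], insert wi h ij cpm[OF w ij(2)], auto)
  also have "rpm m (winv m w) i = cpm m w i" using rpm_winv[OF w ij(1)] .
  finally show ?thesis .
qed

lemma conj_set_mono: assumes w: "monomial_mat m w"
  shows "conj_set m w H = {w * h * winv m w | h. h \<in> H}"
  unfolding conj_set_def using inv_unique[OF w] w_winv[OF w] winv_index(2) by blast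

lemma conj_Lev: assumes G: "G \<subseteq> carrier_mat m m" and w: "monomial_mat m w"
  and cl1: "\<And>A. A \<in> G \<Longrightarrow> w * A * winv m w \<in> G"
  and cl2: "\<And>A. A \<in> G \<Longrightarrow> winv m w * A * w \<in> G"
  shows "conj_set m w (Lev G m S) = Lev G m {i. i < m \<and> rpm m w i \<in> S}"
proof -
  have wc: "w \<in> carrier_mat m m" using mono_carrier[OF w] .
  have wi: "winv m w \<in> carrier_mat m m" by (rule winv_index(2))
  show ?thesis unfolding conj_set_mono[OF w]
  proof (intro equalityI subsetI)
    fix B assume "B \<in> {w * h * winv m w |h. h \<in> Lev G m S}"
    then obtain h where B: "B = w * h * winv m w" and h: "h \<in> Lev G m S" by blast
    have hG: "h \<in> G" and hc: "h \<in> carrier_mat m m" using h G unfolding Lev_def by auto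
    show "B \<in> Lev G m {i. i < m \<and> rpm m w i \<in> S}" unfolding Lev_def
    proof (intro CollectI conjI allI impI)
      show "B \<in> G" using cl1[OF hG] B by simp
      fix i j assume ij: "i < m" "j < m" and c: "i \<noteq> j \<and> (i \<notin> {i. i < m \<and> rpm m w i \<in> S} \<or> j \<notin> {i. i < m \<and> rpm m w i \<in> S})"
      have ne: "rpm m w i \<noteq> rpm m w j" using c ij cpm_rpm[OF w] by metis
      have "h $$ (rpm m w i, rpm m w j) = 0" using h ne c ij rpm[OF w] unfolding Lev_def by auto
      thus "B $$ (i,j) = 0" unfolding B conj_entry[OF w hc ij] by simp
    qed
  next
    fix B assume B: "B \<in> Lev G m {i. i < m \<and> rpm m w i \<in> S}"
    have BG: "B \<in> G" and Bc: "B \<in> carrier_mat m m" using B G unfolding Lev_def by auto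
    define h where "h = winv m w * B * w"
    have hc: "h \<in> carrier_mat m m" unfolding h_def using wi Bc wc by auto
    have "w * h * winv m w = (w * winv m w) * B * (w * winv m w)"
      unfolding h_def using wi Bc wc by (simp add: assoc_mult_mat[of _ m m _ m _ m])
    also have "\<dots> = B" using w_winv[OF w] Bc by simp
    finally have eq: "B = w * h * winv m w" by simp
    have "h \<in> Lev G m S" unfolding Lev_def
    proof (intro CollectI conjI allI impI)
      show "h \<in> G" unfolding h_def using cl2[OF BG] .
      fix a b assume ab: "a < m" "b < m" and c: "a \<noteq> b \<and> (a \<notin> S \<or> b \<notin> S)"
      have ne: "cpm m w a \<noteq> cpm m w b" using c ab rpm_cpm[OF w] by metis
      have "B $$ (cpm m w a, cpm m w b) = 0" using B ne c ab cpm[OF w] rpm_cpm[OF w] unfolding Lev_def by auto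
      thus "h $$ (a,b) = 0" unfolding h_def conj_entry'[OF w Bc ab] by simp
    qed
    thus "B \<in> {w * h * winv m w |h. h \<in> Lev G m S}" using eq by blast
  qed
qed



definition starf :: "('k::field \<Rightarrow> 'k) \<Rightarrow> 'k mat \<Rightarrow> 'k mat" where
  "starf f A = mat (dim_col A) (dim_row A) (\<lambda>(i,j). f (A $$ (j,i)))"

lemma starf_index[simp]: "i < dim_col A \<Longrightarrow> j < dim_row A \<Longrightarrow> starf f A $$ (i,j) = f (A $$ (j,i))"
  unfolding starf_def by simp
lemma starf_dim[simp]: "dim_row (starf f A) = dim_col A" "dim_col (starf f A) = dim_row A"
  unfolding starf_def by simp_all

lemma starf_carrier: assumes "A \<in> carrier_mat m m" shows "starf f A \<in> carrier_mat m m"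
proof -
  have "dim_row A = m" "dim_col A = m" using assms by (simp_all only: carrier_mat_def mem_Collect_eq)
  thus ?thesis by (intro carrier_matI) (simp_all only: starf_dim)
qed

lemma mono_transp: assumes M: "monomial_mat m M" and W: "W \<in> carrier_mat m m"
  and nz: "\<And>i j. i < m \<Longrightarrow> j < m \<Longrightarrow> (W $$ (i,j) \<noteq> 0) = (M $$ (j,i) \<noteq> 0)"
  shows "monomial_mat m W" "\<And>j. j < m \<Longrightarrow> cpm m W j = rpm m M j" "\<And>i. i < m \<Longrightarrow> rpm m W i = cpm m M i"
proof -
  have a: "\<forall>j<m. \<exists>!i. i < m \<and> M $$ (i, j) \<noteq> 0"
   and b: "\<forall>i<m. \<exists>!j. j < m \<and> M $$ (i, j) \<noteq> 0" using M unfolding monomial_mat_def by auto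
  have c: "\<forall>i<m. \<exists>!j. j < m \<and> W $$ (i, j) \<noteq> 0"
  proof (intro allI impI)
    fix i assume i: "i < m"
    have e: "(\<lambda>j. j < m \<and> W $$ (i, j) \<noteq> 0) = (\<lambda>j. j < m \<and> M $$ (j, i) \<noteq> 0)"
      using i nz by (intro ext) metis
    show "\<exists>!j. j < m \<and> W $$ (i, j) \<noteq> 0" unfolding e using a i by blast
  qed
  have d: "\<forall>j<m. \<exists>!i. i < m \<and> W $$ (i, j) \<noteq> 0"
  proof (intro allI impI)
    fix j assume j: "j < m"
    have e: "(\<lambda>i. i < m \<and> W $$ (i, j) \<noteq> 0) = (\<lambda>i. i < m \<and> M $$ (j, i) \<noteq> 0)"
      using j nz by (intro ext) metis
    show "\<exists>!i. i < m \<and> W $$ (i, j) \<noteq> 0" unfolding e using b j by blast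
  qed
  show WM: "monomial_mat m W" unfolding monomial_mat_def using c d W by blast
  show "\<And>j. j < m \<Longrightarrow> cpm m W j = rpm m M j"
  proof -
    fix j assume j: "j < m"
    show "cpm m W j = rpm m M j" by (rule cpm_eq[OF WM rpm(1)[OF M j] j], unfold nz[OF rpm(1)[OF M j] j], rule rpm(2)[OF M j])
  qed
  show "\<And>i. i < m \<Longrightarrow> rpm m W i = cpm m M i"
  proof -
    fix i assume i: "i < m"
    show "rpm m W i = cpm m M i" by (rule rpm_eq[OF WM i cpm(1)[OF M i]], unfold nz[OF i cpm(1)[OF M i]], rule cpm(2)[OF M i])
  qed
qed

locale fstar =
  fixes f :: "'k::field \<Rightarrow> 'k"
  assumes f0: "f 0 = 0" and f1: "f 1 = 1" and fmult: "\<And>x y. f (x * y) = f x * f y"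
    and fnz: "\<And>x. x \<noteq> 0 \<Longrightarrow> f x \<noteq> 0"
begin

lemma fnz_iff: "(f x \<noteq> 0) = (x \<noteq> 0)" using f0 fnz by metis

lemma star_mono: assumes M: "monomial_mat m M"
  shows "monomial_mat m (starf f M)" "\<And>j. j < m \<Longrightarrow> cpm m (starf f M) j = rpm m M j"
    "\<And>i. i < m \<Longrightarrow> rpm m (starf f M) i = cpm m M i"
proof -
  have Mc: "M \<in> carrier_mat m m" using mono_carrier[OF M] .
  have nz: "\<And>i j. i < m \<Longrightarrow> j < m \<Longrightarrow> (starf f M $$ (i,j) \<noteq> 0) = (M $$ (j,i) \<noteq> 0)"
  proof -
    fix i j assume ij: "i < m" "j < m"
    have "starf f M $$ (i,j) = f (M $$ (j,i))" by (rule starf_index, insert Mc ij, auto)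
    thus "(starf f M $$ (i,j) \<noteq> 0) = (M $$ (j,i) \<noteq> 0)" by (simp only: fnz_iff)
  qed
  show "monomial_mat m (starf f M)" "\<And>j. j < m \<Longrightarrow> cpm m (starf f M) j = rpm m M j"
    "\<And>i. i < m \<Longrightarrow> rpm m (starf f M) i = cpm m M i"
    using mono_transp[OF M starf_carrier[OF Mc] nz] by auto
qed

lemma star_mult_L: assumes M: "monomial_mat m M" and N: "N \<in> carrier_mat m m"
  shows "starf f (M * N) = starf f N * starf f M"
proof (rule eq_matI)
  have Mc: "M \<in> carrier_mat m m" using mono_carrier[OF M] .
  fix a b assume "a < dim_row (starf f N * starf f M)" "b < dim_col (starf f N * starf f M)"
  hence ab: "a < m" "b < m" using Mc N by auto
  have "starf f (M * N) $$ (a,b) = f ((M * N) $$ (b,a))" using ab Mc N by simp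
  also have "(M * N) $$ (b,a) = M $$ (b, rpm m M b) * N $$ (rpm m M b, a)"
    by (rule mult_left[OF M], insert N ab, auto)
  also have "f \<dots> = f (N $$ (rpm m M b, a)) * f (M $$ (b, rpm m M b))" by (simp add: fmult)
  also have "\<dots> = (starf f N * starf f M) $$ (a,b)"
    using mult_right[OF star_mono(1)[OF M], of "starf f N" a b] ab N Mc rpm[OF M ab(2)]
    by (simp add: star_mono(2)[OF M])
  finally show "starf f (M * N) $$ (a,b) = (starf f N * starf f M) $$ (a,b)" .
qed (insert mono_carrier[OF M] N, auto)

lemma star_mult_R: assumes N: "monomial_mat m N" and M: "M \<in> carrier_mat m m"
  shows "starf f (M * N) = starf f N * starf f M"
proof (rule eq_matI)
  have Nc: "N \<in> carrier_mat m m" using mono_carrier[OF N] .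
  fix a b assume "a < dim_row (starf f N * starf f M)" "b < dim_col (starf f N * starf f M)"
  hence ab: "a < m" "b < m" using Nc M by auto
  have "starf f (M * N) $$ (a,b) = f ((M * N) $$ (b,a))" using ab Nc M by simp
  also have "(M * N) $$ (b,a) = M $$ (b, cpm m N a) * N $$ (cpm m N a, a)"
    by (rule mult_right[OF N], insert M ab, auto)
  also have "f \<dots> = f (N $$ (cpm m N a, a)) * f (M $$ (b, cpm m N a))" by (simp add: fmult mult.commute)
  also have "\<dots> = (starf f N * starf f M) $$ (a,b)"
    using mult_left[OF star_mono(1)[OF N], of "starf f M" a b] ab M Nc cpm[OF N ab(1)]
    by (simp add: star_mono(3)[OF N])
  finally show "starf f (M * N) $$ (a,b) = (starf f N * starf f M) $$ (a,b)" .
qed (insert mono_carrier[OF N] M, auto)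

lemma star_one: "starf f (1\<^sub>m m) = 1\<^sub>m m"
  by (rule eq_matI, auto simp: f0 f1)

definition FG :: "'k mat \<Rightarrow> nat \<Rightarrow> 'k mat set" where
  "FG J m = {A \<in> carrier_mat m m. starf f A * J * A = J}"

lemma FG_mult_L: assumes J: "J \<in> carrier_mat m m" and w: "monomial_mat m w" "w \<in> FG J m"
  and A: "A \<in> FG J m" shows "w * A \<in> FG J m"
proof -
  have wc: "w \<in> carrier_mat m m" and Ac: "A \<in> carrier_mat m m" and
    ew: "starf f w * J * w = J" and eA: "starf f A * J * A = J" using w A unfolding FG_def by auto
  have sw: "starf f w \<in> carrier_mat m m" "starf f A \<in> carrier_mat m m" using wc Ac starf_carrier by auto
  have "starf f (w * A) * J * (w * A) = starf f A * (starf f w * J * w) * A"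
    unfolding star_mult_L[OF w(1) Ac] using sw J wc Ac by (simp add: assoc_mult_mat[of _ m m _ m _ m])
  also have "\<dots> = J" using ew eA by simp
  finally show ?thesis unfolding FG_def using wc Ac by auto
qed

lemma FG_mult_R: assumes J: "J \<in> carrier_mat m m" and w: "monomial_mat m w" "w \<in> FG J m"
  and A: "A \<in> FG J m" shows "A * w \<in> FG J m"
proof -
  have wc: "w \<in> carrier_mat m m" and Ac: "A \<in> carrier_mat m m" and
    ew: "starf f w * J * w = J" and eA: "starf f A * J * A = J" using w A unfolding FG_def by auto
  have sw: "starf f w \<in> carrier_mat m m" "starf f A \<in> carrier_mat m m" using wc Ac starf_carrier by auto
  have "starf f (A * w) * J * (A * w) = starf f w * (starf f A * J * A) * w"
    unfolding star_mult_R[OF w(1) Ac] using sw J wc Ac by (simp add: assoc_mult_mat[of _ m m _ m _ m])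
  also have "\<dots> = J" using ew eA by simp
  finally show ?thesis unfolding FG_def using wc Ac by auto
qed

lemma FG_winv: assumes J: "J \<in> carrier_mat m m" and w: "monomial_mat m w" "w \<in> FG J m"
  shows "winv m w \<in> FG J m"
proof -
  have wc: "w \<in> carrier_mat m m" and ew: "starf f w * J * w = J" using w unfolding FG_def by auto
  have wi: "winv m w \<in> carrier_mat m m" by (rule winv_index(2))
  have sw: "starf f w \<in> carrier_mat m m" "starf f (winv m w) \<in> carrier_mat m m" using wc wi starf_carrier by auto
  have "starf f (winv m w) * J * winv m w = starf f (winv m w) * (starf f w * J * w) * winv m w"
    using ew by simp
  also have "\<dots> = starf f (w * winv m w) * J * (w * winv m w)"
    unfolding star_mult_L[OF w(1) wi] using sw J wc wi by (simp add: assoc_mult_mat[of _ m m _ m _ m])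
  also have "\<dots> = J" unfolding w_winv[OF w(1)] star_one using J by simp
  finally show ?thesis unfolding FG_def using wi by auto
qed

lemma FG_conj: assumes J: "J \<in> carrier_mat m m" and w: "monomial_mat m w" "w \<in> FG J m"
  and A: "A \<in> FG J m" shows "w * A * winv m w \<in> FG J m" "winv m w * A * w \<in> FG J m"
  using FG_mult_R[OF J winv_mono[OF w(1)] FG_winv[OF J w] FG_mult_L[OF J w A]]
    FG_mult_R[OF J w FG_mult_L[OF J winv_mono[OF w(1)] FG_winv[OF J w] A]] by auto

lemma form_entry: assumes J: "J \<in> carrier_mat m m" and w: "monomial_mat m w" and ab: "a < m" "b < m"
  shows "(starf f w * J * w) $$ (a,b) = f (w $$ (cpm m w a, a)) * J $$ (cpm m w a, cpm m w b) * w $$ (cpm m w b, b)"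
proof -
  have wc: "w \<in> carrier_mat m m" using mono_carrier[OF w] .
  have "(starf f w * J * w) $$ (a,b) = (starf f w * J) $$ (a, cpm m w b) * w $$ (cpm m w b, b)"
    by (rule mult_right[OF w], insert J wc ab, auto)
  also have "(starf f w * J) $$ (a, cpm m w b) = starf f w $$ (a, rpm m (starf f w) a) * J $$ (rpm m (starf f w) a, cpm m w b)"
    by (rule mult_left[OF star_mono(1)[OF w]], insert J wc ab cpm[OF w ab(2)], auto)
  also have "rpm m (starf f w) a = cpm m w a" using star_mono(3)[OF w ab(1)] .
  also have "starf f w $$ (a, cpm m w a) = f (w $$ (cpm m w a, a))" using wc ab cpm[OF w ab(1)] by simp
  finally show ?thesis .
qed

lemma FG_pair: assumes J: "J \<in> carrier_mat m m" and w: "monomial_mat m w" "w \<in> FG J m"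
  and Jnz: "\<And>i j. i < m \<Longrightarrow> j < m \<Longrightarrow> (J $$ (i,j) \<noteq> 0) = (i + j = m - 1)"
  and a: "a < m" shows "cpm m w (m - 1 - a) = m - 1 - cpm m w a"
proof -
  let ?b = "m - 1 - a"
  have b: "?b < m" using a by auto
  have "(starf f w * J * w) $$ (a, ?b) = J $$ (a, ?b)" using w unfolding FG_def by auto
  also have "J $$ (a, ?b) \<noteq> 0" using Jnz[OF a b] a by auto
  finally have "J $$ (cpm m w a, cpm m w ?b) \<noteq> 0" unfolding form_entry[OF J w(1) a b] by auto
  hence "cpm m w a + cpm m w ?b = m - 1" using Jnz cpm[OF w(1)] a b by auto
  thus ?thesis by auto
qed

end

definition permat :: "nat \<Rightarrow> (nat \<Rightarrow> nat) \<Rightarrow> 'k::field mat" where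
  "permat m \<rho> = mat m m (\<lambda>(i,j). if i = \<rho> j then 1 else 0)"

lemma permat: assumes "bij_betw \<rho> {..<m} {..<m}"
  shows "monomial_mat m (permat m \<rho> :: 'k::field mat)" "\<And>j. j < m \<Longrightarrow> cpm m (permat m \<rho> :: 'k mat) j = \<rho> j"
    "\<And>j. j < m \<Longrightarrow> (permat m \<rho> :: 'k mat) $$ (\<rho> j, j) = 1"
proof -
  have r: "\<And>j. j < m \<Longrightarrow> \<rho> j < m" using assms unfolding bij_betw_def by auto
  have inj: "\<And>i j. i < m \<Longrightarrow> j < m \<Longrightarrow> \<rho> i = \<rho> j \<Longrightarrow> i = j"
    using assms unfolding bij_betw_def inj_on_def by auto
  have surj: "\<And>i. i < m \<Longrightarrow> \<exists>j<m. \<rho> j = i"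
    using assms unfolding bij_betw_def by (metis imageE lessThan_iff)
  have idx: "\<And>i j. i < m \<Longrightarrow> j < m \<Longrightarrow> (permat m \<rho> $$ (i,j) \<noteq> (0::'k)) = (i = \<rho> j)"
    unfolding permat_def by simp
  have c: "(permat m \<rho> :: 'k mat) \<in> carrier_mat m m" unfolding permat_def by simp
  have row: "\<forall>i<m. \<exists>!j. j < m \<and> permat m \<rho> $$ (i, j) \<noteq> (0::'k)"
  proof (intro allI impI)
    fix i assume i: "i < m"
    obtain j where j: "j < m" "\<rho> j = i" using surj[OF i] by auto
    show "\<exists>!j. j < m \<and> permat m \<rho> $$ (i, j) \<noteq> (0::'k)"
      by (rule ex1I[of _ j], insert j idx i inj, auto)
  qed
  have col: "\<forall>j<m. \<exists>!i. i < m \<and> permat m \<rho> $$ (i, j) \<noteq> (0::'k)"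
  proof (intro allI impI)
    fix j assume j: "j < m"
    show "\<exists>!i. i < m \<and> permat m \<rho> $$ (i, j) \<noteq> (0::'k)"
      by (rule ex1I[of _ "\<rho> j"], insert j idx r, auto)
  qed
  have M: "monomial_mat m (permat m \<rho> :: 'k mat)" unfolding monomial_mat_def using c row col by blast
  show "monomial_mat m (permat m \<rho> :: 'k mat)" by (rule M)
  show "\<And>j. j < m \<Longrightarrow> (permat m \<rho> :: 'k mat) $$ (\<rho> j, j) = 1" using r unfolding permat_def by auto
  show "\<And>j. j < m \<Longrightarrow> cpm m (permat m \<rho> :: 'k mat) j = \<rho> j"
    by (rule cpm_eq[OF M], insert r, auto simp: permat_def)
qed

lemma (in fstar) permat_FG: assumes J: "J \<in> carrier_mat m m" and r: "bij_betw \<rho> {..<m} {..<m}"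
  and inv: "\<And>a b. a < m \<Longrightarrow> b < m \<Longrightarrow> J $$ (\<rho> a, \<rho> b) = J $$ (a,b)"
  shows "permat m \<rho> \<in> FG J m"
proof -
  have M: "monomial_mat m (permat m \<rho>)" by (rule permat(1)[OF r])
  have "starf f (permat m \<rho>) * J * permat m \<rho> = J"
  proof (rule eq_matI)
    fix a b assume "a < dim_row J" "b < dim_col J"
    hence ab: "a < m" "b < m" using J by auto
    show "(starf f (permat m \<rho>) * J * permat m \<rho>) $$ (a,b) = J $$ (a,b)"
      unfolding form_entry[OF J M ab] permat(2)[OF r ab(1)] permat(2)[OF r ab(2)]
        permat(3)[OF r ab(1)] permat(3)[OF r ab(2)] f1 inv[OF ab] by simp
  qed (insert J mono_carrier[OF M], auto)
  thus ?thesis unfolding FG_def using mono_carrier[OF M] by auto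
qed



definition SOG :: "nat \<Rightarrow> 'k::field mat set" where
  "SOG n = {A \<in> carrier_mat (2*n+1) (2*n+1). det A = 1 \<and>
        (\<forall>v \<in> carrier_vec (2*n+1). qform n (A *\<^sub>v v) = qform n v)}"

lemma SOG_eq: "classical_group SO_odd n q = SOG n"
  unfolding SOG_def by simp

lemma SO_mult: assumes A: "A \<in> SOG n" and B: "B \<in> SOG n" shows "A * B \<in> SOG n"
proof -
  let ?m = "2*n+1"
  have Ac: "A \<in> carrier_mat ?m ?m" and Bc: "B \<in> carrier_mat ?m ?m" and dA: "det A = 1" and dB: "det B = 1"
    and qA: "\<And>v. v \<in> carrier_vec ?m \<Longrightarrow> qform n (A *\<^sub>v v) = qform n v"
    and qB: "\<And>v. v \<in> carrier_vec ?m \<Longrightarrow> qform n (B *\<^sub>v v) = qform n v"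
    using A B unfolding SOG_def by auto
  have "det (A * B) = 1" using det_mult[OF Ac Bc] dA dB by simp
  moreover have "\<forall>v \<in> carrier_vec ?m. qform n ((A * B) *\<^sub>v v) = qform n v"
  proof
    fix v :: "'a vec" assume v: "v \<in> carrier_vec ?m"
    have "(A * B) *\<^sub>v v = A *\<^sub>v (B *\<^sub>v v)" using Ac Bc v by (rule assoc_mult_mat_vec)
    moreover have "B *\<^sub>v v \<in> carrier_vec ?m" using Bc v by (rule mult_mat_vec_carrier)
    ultimately show "qform n ((A * B) *\<^sub>v v) = qform n v" using qA qB v by simp
  qed
  moreover have "A * B \<in> carrier_mat ?m ?m" using Ac Bc by (rule mult_carrier_mat)
  ultimately show ?thesis unfolding SOG_def by blast
qed

lemma SO_winv: assumes w: "monomial_mat (2*n+1) w" "w \<in> SOG n" shows "winv (2*n+1) w \<in> SOG n"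
proof -
  let ?m = "2*n+1"
  let ?y = "winv ?m w"
  have wc: "w \<in> carrier_mat ?m ?m" and dw: "det w = 1"
    and qw: "\<And>v. v \<in> carrier_vec ?m \<Longrightarrow> qform n (w *\<^sub>v v) = qform n v"
    using w unfolding SOG_def by auto
  have yc: "?y \<in> carrier_mat ?m ?m" by (rule winv_index(2))
  have "det w * det ?y = 1" using det_mult[OF wc yc] w_winv[OF w(1)] by simp
  hence "det ?y = 1" using dw by simp
  moreover have "\<forall>v \<in> carrier_vec ?m. qform n (?y *\<^sub>v v) = qform n v"
  proof
    fix v :: "'a vec" assume v: "v \<in> carrier_vec ?m"
    have yv: "?y *\<^sub>v v \<in> carrier_vec ?m" using yc v by (rule mult_mat_vec_carrier)
    have "qform n (?y *\<^sub>v v) = qform n (w *\<^sub>v (?y *\<^sub>v v))" using qw[OF yv] by simp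
    also have "w *\<^sub>v (?y *\<^sub>v v) = (w * ?y) *\<^sub>v v" using wc yc v by (simp only: assoc_mult_mat_vec)
    also have "\<dots> = v" unfolding w_winv[OF w(1)] using v by simp
    finally show "qform n (?y *\<^sub>v v) = qform n v" .
  qed
  ultimately show ?thesis unfolding SOG_def using yc by blast
qed

lemma qform_two: fixes u :: "'k::field vec"
  assumes ij: "i < 2*n+1" "j < 2*n+1" "i \<noteq> n" "j \<noteq> n"
    and supp: "\<And>k. k < 2*n+1 \<Longrightarrow> k \<noteq> i \<Longrightarrow> k \<noteq> j \<Longrightarrow> u $ k = 0"
  shows "qform n u = (if i + j = 2*n then u $ i * u $ j else 0)"
proof -
  have un: "u $ n = 0" using supp ij by auto
  have s: "(\<Sum>k<n. u $ k * u $ (2*n - k)) = (if i + j = 2*n then u $ i * u $ j else 0)"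
  proof (cases "i + j = 2*n")
    case True
    define k0 where "k0 = min i j"
    have k0: "k0 < n" using True ij unfolding k0_def by auto
    have "(\<Sum>k<n. u $ k * u $ (2*n - k)) = (\<Sum>k\<in>{0..<n}. u $ k * u $ (2*n - k))"
      by (simp add: atLeast0LessThan)
    also have "\<dots> = u $ k0 * u $ (2*n - k0)"
    proof (rule sum_single[OF k0])
      fix k assume k: "k < n" "k \<noteq> k0"
      show "u $ k * u $ (2 * n - k) = 0"
      proof (cases "k = i \<or> k = j")
        case True
        hence "2*n - k \<noteq> i \<and> 2*n - k \<noteq> j" using k \<open>i + j = 2*n\<close> unfolding k0_def by auto
        hence "u $ (2*n - k) = 0" using supp[of "2*n-k"] by auto
        thus ?thesis by simp
      next
        case False
        hence "u $ k = 0" using supp k by auto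
        thus ?thesis by simp
      qed
    qed
    also have "\<dots> = u $ i * u $ j"
    proof -
      have e: "2*n - i = j" "2*n - j = i" using True by auto
      show ?thesis
      proof (cases "i \<le> j")
        case True hence "k0 = i" unfolding k0_def by simp
        thus ?thesis by (simp only: e)
      next
        case False hence "k0 = j" unfolding k0_def by simp
        thus ?thesis by (simp only: e) (rule mult.commute)
      qed
    qed
    finally show ?thesis using True by simp
  next
    case False
    have "(\<Sum>k<n. u $ k * u $ (2*n - k)) = 0"
    proof (rule sum.neutral, intro ballI)
      fix k assume k: "k \<in> {..<n}"
      show "u $ k * u $ (2 * n - k) = 0"
      proof (cases "(k = i \<or> k = j) \<and> (2*n - k = i \<or> 2*n - k = j)")
        case True
        hence "i + j = 2*n" using k by auto
        thus ?thesis using False by simp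
      next
        case c: False
        show ?thesis
        proof (cases "k = i \<or> k = j")
          case True
          hence "u $ (2*n - k) = 0" using c supp[of "2*n-k"] k by auto
          thus ?thesis by simp
        next
          case False
          hence "u $ k = 0" using supp k by auto
          thus ?thesis by simp
        qed
      qed
    qed
    thus ?thesis using False by simp
  qed
  show ?thesis unfolding qform_def s un by simp
qed

lemma qform_mid: fixes u :: "'k::field vec"
  assumes supp: "\<And>k. k < 2*n+1 \<Longrightarrow> k \<noteq> n \<Longrightarrow> u $ k = 0"
  shows "qform n u = u $ n * u $ n"
proof -
  have "(\<Sum>k<n. u $ k * u $ (2*n - k)) = 0"
    by (rule sum.neutral, insert supp, auto)
  thus ?thesis unfolding qform_def by simp
qed

lemma SO_pair: assumes w: "monomial_mat (2*n+1) w" "w \<in> SOG n"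
  shows "cpm (2*n+1) w n = n" "\<And>a. a < 2*n+1 \<Longrightarrow> cpm (2*n+1) w (2*n - a) = 2*n - cpm (2*n+1) w a"
proof -
  let ?m = "2*n+1"
  have wc: "w \<in> carrier_mat ?m ?m"
    and qw: "\<And>v. v \<in> carrier_vec ?m \<Longrightarrow> qform n (w *\<^sub>v v) = qform n v"
    using w unfolding SOG_def by auto
  have ent: "\<And>v i. v \<in> carrier_vec ?m \<Longrightarrow> i < ?m \<Longrightarrow> (w *\<^sub>v v) $ i = w $$ (i, rpm ?m w i) * v $ rpm ?m w i"
    by (rule mult_vec[OF w(1)])
  have rc: "\<And>i a. i < ?m \<Longrightarrow> a < ?m \<Longrightarrow> (rpm ?m w i = a) = (i = cpm ?m w a)"
    using rpm_cpm[OF w(1)] cpm_rpm[OF w(1)] by metis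
  define e :: "'a vec" where "e = unit_vec ?m n"
  have ec: "e \<in> carrier_vec ?m" unfolding e_def by simp
  have qe: "qform n e = 1" by (subst qform_mid, auto simp: e_def)
  show cn: "cpm ?m w n = n"
  proof (rule ccontr)
    assume ne: "cpm ?m w n \<noteq> n"
    let ?c = "cpm ?m w n"
    have c: "?c < ?m" using cpm[OF w(1)] by simp
    have "qform n (w *\<^sub>v e) = (if ?c + ?c = 2*n then (w *\<^sub>v e) $ ?c * (w *\<^sub>v e) $ ?c else 0)"
    proof (rule qform_two[OF c c ne ne])
      fix k assume k: "k < ?m" "k \<noteq> ?c" "k \<noteq> ?c"
      have "rpm ?m w k \<noteq> n" using rc[OF k(1), of n] k by auto
      thus "(w *\<^sub>v e) $ k = 0" unfolding ent[OF ec k(1)] using rpm[OF w(1) k(1)] by (simp add: e_def)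
    qed
    also have "\<dots> = 0" using ne by auto
    finally show False using qw[OF ec] qe by simp
  qed
  fix a assume a: "a < ?m"
  show "cpm ?m w (2*n - a) = 2*n - cpm ?m w a"
  proof (cases "a = n")
    case True thus ?thesis using cn by simp
  next
    case an: False
    define b where "b = 2*n - a"
    have b: "b < ?m" "b \<noteq> n" "b \<noteq> a" "a + b = 2*n" using a an unfolding b_def by auto
    define v :: "'a vec" where "v = vec ?m (\<lambda>k. if k = a \<or> k = b then 1 else 0)"
    have vc: "v \<in> carrier_vec ?m" unfolding v_def by simp
    have qv: "qform n v = 1"
      by (subst qform_two[OF a b(1) an b(2)], insert b a, auto simp: v_def)
    let ?ca = "cpm ?m w a" and ?cb = "cpm ?m w b"
    have nm: "n < ?m" by simp
    have ca: "?ca < ?m" "?ca \<noteq> n"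
    proof -
      show "?ca < ?m" using cpm[OF w(1) a] by simp
      show "?ca \<noteq> n"
      proof
        assume "?ca = n"
        hence "rpm ?m w ?ca = rpm ?m w (cpm ?m w n)" using cn by simp
        thus False using rpm_cpm[OF w(1) a] rpm_cpm[OF w(1) nm] an by simp
      qed
    qed
    have cb: "?cb < ?m" "?cb \<noteq> n"
    proof -
      show "?cb < ?m" using cpm[OF w(1) b(1)] by simp
      show "?cb \<noteq> n"
      proof
        assume "?cb = n"
        hence "rpm ?m w ?cb = rpm ?m w (cpm ?m w n)" using cn by simp
        thus False using rpm_cpm[OF w(1) b(1)] rpm_cpm[OF w(1) nm] b by simp
      qed
    qed
    have "qform n (w *\<^sub>v v) = (if ?ca + ?cb = 2*n then (w *\<^sub>v v) $ ?ca * (w *\<^sub>v v) $ ?cb else 0)"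
    proof (rule qform_two[OF ca(1) cb(1) ca(2) cb(2)])
      fix k assume k: "k < ?m" "k \<noteq> ?ca" "k \<noteq> ?cb"
      have "rpm ?m w k \<noteq> a" "rpm ?m w k \<noteq> b" using rc[OF k(1)] k a b by auto
      thus "(w *\<^sub>v v) $ k = 0" unfolding ent[OF vc k(1)] using rpm[OF w(1) k(1)] by (simp add: v_def)
    qed
    moreover have "(w *\<^sub>v v) $ ?ca \<noteq> 0" "(w *\<^sub>v v) $ ?cb \<noteq> 0"
      unfolding ent[OF vc ca(1)] ent[OF vc cb(1)] rpm_cpm[OF w(1) a] rpm_cpm[OF w(1) b(1)]
      using cpm[OF w(1) a] cpm[OF w(1) b(1)] a b by (auto simp: v_def)
    ultimately have "?ca + ?cb = 2*n" using qw[OF vc] qv by (auto split: if_splits)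
    thus ?thesis unfolding b_def by auto
  qed
qed



definition Sk :: "nat \<Rightarrow> nat \<Rightarrow> nat \<Rightarrow> nat set" where
  "Sk m n r = {i. n - r \<le> i \<and> i < m - (n - r)}"

definition goodp :: "nat \<Rightarrow> nat \<Rightarrow> (nat \<Rightarrow> nat) \<Rightarrow> bool" where
  "goodp m n \<rho> \<longleftrightarrow> bij_betw \<rho> {..<m} {..<m} \<and> (\<forall>i<m. \<rho> (m - 1 - i) = m - 1 - \<rho> i) \<and> (\<forall>i<m. (\<rho> i < n) = (i < n))"

lemma pi_exists: assumes P: "P \<subseteq> {..<n}"
  shows "\<exists>\<pi>. (\<forall>j<n. \<pi> j < n) \<and> inj_on \<pi> {..<n} \<and> (\<forall>j<n. (\<pi> j \<in> P) = (n - card P \<le> j))"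
proof -
  let ?k = "card P"
  have fP: "finite P" using P finite_subset by blast
  have kn: "?k \<le> n" using card_mono[OF _ P] by simp
  have "card {n - ?k..<n} = card P" using kn by simp
  then obtain f where f: "bij_betw f {n - ?k..<n} P" using finite_same_card_bij[OF _ fP] by blast
  have "card {..<n - ?k} = card ({..<n} - P)" using kn P fP by (simp add: card_Diff_subset)
  then obtain g where g: "bij_betw g {..<n - ?k} ({..<n} - P)" using finite_same_card_bij by (metis finite_Diff finite_lessThan)
  define \<pi> where "\<pi> j = (if n - ?k \<le> j then f j else g j)" for j
  have r1: "\<And>j. j < n \<Longrightarrow> n - ?k \<le> j \<Longrightarrow> \<pi> j \<in> P" using f unfolding \<pi>_def bij_betw_def by auto
  have r2: "\<And>j. j < n \<Longrightarrow> \<not> n - ?k \<le> j \<Longrightarrow> \<pi> j \<in> {..<n} - P" using g unfolding \<pi>_def bij_betw_def by auto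
  have "\<forall>j<n. \<pi> j < n" using r1 r2 P by (meson Diff_iff lessThan_iff subset_iff)
  moreover have "inj_on \<pi> {..<n}"
  proof (rule inj_onI)
    fix i j assume ij: "i \<in> {..<n}" "j \<in> {..<n}" "\<pi> i = \<pi> j"
    show "i = j"
    proof (cases "n - ?k \<le> i"; cases "n - ?k \<le> j")
      assume "n - ?k \<le> i" "n - ?k \<le> j"
      thus ?thesis using f ij unfolding \<pi>_def bij_betw_def inj_on_def by auto
    next
      assume "\<not> n - ?k \<le> i" "\<not> n - ?k \<le> j"
      thus ?thesis using g ij unfolding \<pi>_def bij_betw_def inj_on_def by auto
    next
      assume "n - ?k \<le> i" "\<not> n - ?k \<le> j"
      thus ?thesis using r1[of i] r2[of j] ij by auto
    next
      assume "\<not> n - ?k \<le> i" "n - ?k \<le> j"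
      thus ?thesis using r1[of j] r2[of i] ij by auto
    qed
  qed
  moreover have "\<forall>j<n. (\<pi> j \<in> P) = (n - ?k \<le> j)" using r1 r2 by auto
  ultimately show ?thesis by blast
qed

lemma sub_cancel: "(x::nat) < n \<Longrightarrow> y < n \<Longrightarrow> n \<le> M \<Longrightarrow> M - x = M - y \<Longrightarrow> x = y" by arith

lemma comb: assumes m: "m = 2*n \<or> m = 2*n+1"
  and T: "T \<subseteq> {..<m}" and sym: "\<And>i. i < m \<Longrightarrow> (m - 1 - i \<in> T) = (i \<in> T)"
  and mid: "m = 2*n+1 \<Longrightarrow> n \<in> T"
  shows "\<exists>k\<le>n. \<exists>\<rho>. goodp m n \<rho> \<and> (\<forall>j<m. (j \<in> Sk m n k) = (\<rho> j \<in> T))"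
proof -
  define P where "P = T \<inter> {..<n}"
  have P: "P \<subseteq> {..<n}" unfolding P_def by auto
  define k where "k = card P"
  have kn: "k \<le> n" unfolding k_def using card_mono[OF _ P] by simp
  obtain \<pi> where pr: "\<And>j. j < n \<Longrightarrow> \<pi> j < n" and pinj: "inj_on \<pi> {..<n}"
    and pP: "\<And>j. j < n \<Longrightarrow> (\<pi> j \<in> P) = (n - k \<le> j)"
    using pi_exists[OF P] unfolding k_def by blast
  have pT: "\<And>j. j < n \<Longrightarrow> (\<pi> j \<in> T) = (n - k \<le> j)" using pP pr unfolding P_def by auto
  have pi: "\<And>i j. i < n \<Longrightarrow> j < n \<Longrightarrow> \<pi> i = \<pi> j \<Longrightarrow> i = j" using pinj unfolding inj_on_def by auto
  define \<rho> where "\<rho> i = (if i < n then \<pi> i else if m - 1 - i < n \<and> i < m then m - 1 - \<pi> (m - 1 - i) else i)" for i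
  have third: "\<And>i. i < m \<Longrightarrow> \<not> i < n \<Longrightarrow> \<not> m - 1 - i < n \<Longrightarrow> m = 2*n+1 \<and> i = n" using m by auto
  have r1: "\<And>i. i < n \<Longrightarrow> \<rho> i = \<pi> i" unfolding \<rho>_def by simp
  have r2: "\<And>i. i < m \<Longrightarrow> \<not> i < n \<Longrightarrow> m - 1 - i < n \<Longrightarrow> \<rho> i = m - 1 - \<pi> (m - 1 - i)" unfolding \<rho>_def by simp
  have r3: "\<And>i. i < m \<Longrightarrow> \<not> i < n \<Longrightarrow> \<not> m - 1 - i < n \<Longrightarrow> \<rho> i = i" unfolding \<rho>_def by simp
  have rlt: "\<And>i. i < m \<Longrightarrow> \<rho> i < m"
  proof -
    fix i assume i: "i < m"
    show "\<rho> i < m"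
    proof (cases "i < n")
      case True thus ?thesis using r1 pr m by fastforce
    next
      case False
      show ?thesis
      proof (cases "m - 1 - i < n")
        case True thus ?thesis using r2[OF i False True] i by auto
      next
        case c: False thus ?thesis using r3[OF i False c] i by auto
      qed
    qed
  qed
  have rn: "\<And>i. i < m \<Longrightarrow> (\<rho> i < n) = (i < n)"
  proof -
    fix i assume i: "i < m"
    show "(\<rho> i < n) = (i < n)"
    proof (cases "i < n")
      case True thus ?thesis using r1 pr by auto
    next
      case False
      show ?thesis
      proof (cases "m - 1 - i < n")
        case True
        have "\<pi> (m - 1 - i) < n" using pr True by auto
        thus ?thesis using r2[OF i False True] i False m by auto
      next
        case c: False thus ?thesis using r3[OF i False c] False by auto
      qed
    qed
  qed
  have rinj: "inj_on \<rho> {..<m}"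
  proof (rule inj_onI)
    fix i j assume ij: "i \<in> {..<m}" "j \<in> {..<m}" and e: "\<rho> i = \<rho> j"
    hence i: "i < m" and j: "j < m" by auto
    have same: "(i < n) = (j < n)" using rn[OF i] rn[OF j] e by simp
    show "i = j"
    proof (cases "i < n")
      case True thus ?thesis using same e r1 pi by auto
    next
      case iF: False
      hence jF: "\<not> j < n" using same by simp
      show ?thesis
      proof (cases "m - 1 - i < n"; cases "m - 1 - j < n")
        assume a: "m - 1 - i < n" "m - 1 - j < n"
        have b1: "\<pi> (m - 1 - i) < n" and b2: "\<pi> (m - 1 - j) < n" using pr a by auto
        have b3: "m - 1 - \<pi> (m - 1 - i) = m - 1 - \<pi> (m - 1 - j)" using e r2[OF i iF a(1)] r2[OF j jF a(2)] by simp
        have b4: "n \<le> m - 1" using i iF by simp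
        have "\<pi> (m - 1 - i) = \<pi> (m - 1 - j)" using sub_cancel[OF b1 b2 b4 b3] .
        hence "m - 1 - i = m - 1 - j" using pi a by blast
        thus ?thesis using i j by auto
      next
        assume a: "\<not> m - 1 - i < n" "\<not> m - 1 - j < n"
        thus ?thesis using third[OF i iF a(1)] third[OF j jF a(2)] by auto
      next
        assume a: "m - 1 - i < n" "\<not> m - 1 - j < n"
        have "\<pi> (m - 1 - i) < n" using pr a by auto
        thus ?thesis using e r2[OF i iF a(1)] r3[OF j jF a(2)] third[OF j jF a(2)] i by auto
      next
        assume a: "\<not> m - 1 - i < n" "m - 1 - j < n"
        have "\<pi> (m - 1 - j) < n" using pr a by auto
        thus ?thesis using e r2[OF j jF a(2)] r3[OF i iF a(1)] third[OF i iF a(1)] j by auto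
      qed
    qed
  qed
  have rbij: "bij_betw \<rho> {..<m} {..<m}"
    unfolding bij_betw_def using rinj endo_inj_surj[of "{..<m}" \<rho>] rlt by auto
  have rsym: "\<And>i. i < m \<Longrightarrow> \<rho> (m - 1 - i) = m - 1 - \<rho> i"
  proof -
    fix i assume i: "i < m"
    show "\<rho> (m - 1 - i) = m - 1 - \<rho> i"
    proof (cases "i < n")
      case True
      have a: "m - 1 - i < m" "\<not> m - 1 - i < n" "m - 1 - (m - 1 - i) < n" using True i m by auto
      have "m - 1 - (m - 1 - i) = i" using i by auto
      thus ?thesis using r2[OF a] r1[OF True] by simp
    next
      case iF: False
      show ?thesis
      proof (cases "m - 1 - i < n")
        case True
        have "\<pi> (m - 1 - i) < n" using pr True by auto
        thus ?thesis using r1[OF True] r2[OF i iF True] m by auto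
      next
        case c: False
        thus ?thesis using third[OF i iF c] r3[OF i iF c] by auto
      qed
    qed
  qed
  have good: "goodp m n \<rho>" unfolding goodp_def using rbij rsym rn by auto
  have propT: "\<forall>j<m. (j \<in> Sk m n k) = (\<rho> j \<in> T)"
  proof (intro allI impI)
    fix j assume j: "j < m"
    show "(j \<in> Sk m n k) = (\<rho> j \<in> T)"
    proof (cases "j < n")
      case True
      have "(j \<in> Sk m n k) = (n - k \<le> j)" using True m kn unfolding Sk_def by auto
      thus ?thesis using r1[OF True] pT[OF True] by simp
    next
      case jF: False
      show ?thesis
      proof (cases "m - 1 - j < n")
        case True
        have pl: "\<pi> (m - 1 - j) < n" using pr True by auto
        have "(\<rho> j \<in> T) = (\<pi> (m - 1 - j) \<in> T)"
          using r2[OF j jF True] sym[of "\<pi> (m - 1 - j)"] pl m by auto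
        also have "\<dots> = (n - k \<le> m - 1 - j)" using pT[OF True] .
        also have "\<dots> = (j \<in> Sk m n k)" using jF j kn m unfolding Sk_def by auto
        finally show ?thesis by simp
      next
        case c: False
        have e: "m = 2*n+1" "j = n" using third[OF j jF c] by auto
        thus ?thesis using r3[OF j jF c] mid kn unfolding Sk_def by auto
      qed
    qed
  qed
  show ?thesis using good propT kn by blast
qed



lemma pattern_mono: assumes W: "(W :: 'k::field mat) \<in> carrier_mat m m" and r: "bij_betw \<rho> {..<m} {..<m}"
  and nz: "\<And>i j. i < m \<Longrightarrow> j < m \<Longrightarrow> (W $$ (i,j) \<noteq> 0) = (i = \<rho> j)"
  shows "monomial_mat m W" "\<And>j. j < m \<Longrightarrow> cpm m W j = \<rho> j"
proof -
  have rl: "\<And>j. j < m \<Longrightarrow> \<rho> j < m" using r unfolding bij_betw_def by auto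
  have inj: "\<And>i j. i < m \<Longrightarrow> j < m \<Longrightarrow> \<rho> i = \<rho> j \<Longrightarrow> i = j"
    using r unfolding bij_betw_def inj_on_def by auto
  have surj: "\<And>i. i < m \<Longrightarrow> \<exists>j<m. \<rho> j = i"
    using r unfolding bij_betw_def by (metis imageE lessThan_iff)
  have row: "\<forall>i<m. \<exists>!j. j < m \<and> W $$ (i, j) \<noteq> 0"
  proof (intro allI impI)
    fix i assume i: "i < m"
    obtain j where j: "j < m" "\<rho> j = i" using surj[OF i] by auto
    show "\<exists>!j. j < m \<and> W $$ (i, j) \<noteq> 0"
      by (rule ex1I[of _ j], insert j nz i inj, auto)
  qed
  have col: "\<forall>j<m. \<exists>!i. i < m \<and> W $$ (i, j) \<noteq> 0"
  proof (intro allI impI)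
    fix j assume j: "j < m"
    show "\<exists>!i. i < m \<and> W $$ (i, j) \<noteq> 0"
      by (rule ex1I[of _ "\<rho> j"], insert j nz rl, auto)
  qed
  show M: "monomial_mat m W" unfolding monomial_mat_def using W row col by blast
  show "\<And>j. j < m \<Longrightarrow> cpm m W j = \<rho> j"
    by (rule cpm_eq[OF M], insert rl nz, auto)
qed

interpretation fid: fstar "id :: 'k::field \<Rightarrow> 'k"
  by unfold_locales auto

lemma starf_id: "starf id A = transpose_mat A"
  by (rule eq_matI, auto)

lemma SO_cons: assumes g: "goodp (2*n+1) n \<rho>"
  shows "\<exists>w :: 'k::field mat. monomial_mat (2*n+1) w \<and> w \<in> SOG n \<and> (\<forall>j<2*n+1. cpm (2*n+1) w j = \<rho> j)"
proof -
  let ?m = "2*n+1"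
  have r: "bij_betw \<rho> {..<?m} {..<?m}" and rs: "\<And>i. i < ?m \<Longrightarrow> \<rho> (?m - 1 - i) = ?m - 1 - \<rho> i"
    and rn: "\<And>i. i < ?m \<Longrightarrow> (\<rho> i < n) = (i < n)" using g unfolding goodp_def by auto
  have rl: "\<And>j. j < ?m \<Longrightarrow> \<rho> j < ?m" using r unfolding bij_betw_def by auto
  have rinj: "\<And>i j. i < ?m \<Longrightarrow> j < ?m \<Longrightarrow> \<rho> i = \<rho> j \<Longrightarrow> i = j"
    using r unfolding bij_betw_def inj_on_def by auto
  define P :: "'k mat" where "P = permat ?m \<rho>"
  have PM: "monomial_mat ?m P" and Pc: "\<And>j. j < ?m \<Longrightarrow> cpm ?m P j = \<rho> j"
    and P1: "\<And>j. j < ?m \<Longrightarrow> P $$ (\<rho> j, j) = 1" unfolding P_def using permat[OF r] by auto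
  have Pcar: "P \<in> carrier_mat ?m ?m" using mono_carrier[OF PM] .
  have "P \<in> fid.FG (1\<^sub>m ?m) ?m"
    unfolding P_def by (rule fid.permat_FG[OF one_carrier_mat r], insert rl rinj, auto)
  hence "transpose_mat P * 1\<^sub>m ?m * P = 1\<^sub>m ?m" unfolding fid.FG_def starf_id by auto
  hence "det (transpose_mat P * P) = 1" using Pcar by simp
  hence dP: "det P * det P = 1" using det_mult[of "transpose_mat P" ?m P] det_transpose[OF Pcar] Pcar by simp
  define d where "d = det P"
  have d0: "d \<noteq> 0" using dP unfolding d_def by auto
  define D :: "'k mat" where "D = multrow_mat ?m n d"
  have Dcar: "D \<in> carrier_mat ?m ?m" unfolding D_def by simp
  have Dent: "\<And>i j. i < ?m \<Longrightarrow> j < ?m \<Longrightarrow> D $$ (i,j) = (if i = j then (if i = n then d else 1) else 0)"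
    unfolding D_def by auto
  have idb: "bij_betw id {..<?m} {..<?m}" by simp
  have DM: "monomial_mat ?m D" and Dc: "\<And>j. j < ?m \<Longrightarrow> cpm ?m D j = j"
    using pattern_mono[OF Dcar idb] Dent d0 by auto
  have Dr: "\<And>i. i < ?m \<Longrightarrow> rpm ?m D i = i" using rpm_cpm[OF DM] Dc by metis
  define w where "w = P * D"
  have wcar: "w \<in> carrier_mat ?m ?m" unfolding w_def using Pcar Dcar by simp
  have went: "\<And>i j. i < ?m \<Longrightarrow> j < ?m \<Longrightarrow> w $$ (i,j) = P $$ (i,j) * D $$ (j,j)"
  proof -
    fix i j assume ij: "i < ?m" "j < ?m"
    show "w $$ (i,j) = P $$ (i,j) * D $$ (j,j)"
      unfolding w_def using mult_right[OF DM, of P i j] ij Pcar Dc by simp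
  qed
  have Pent: "\<And>i j. i < ?m \<Longrightarrow> j < ?m \<Longrightarrow> P $$ (i,j) = (if i = \<rho> j then 1 else 0)"
    unfolding P_def permat_def by simp
  have wnz: "\<And>i j. i < ?m \<Longrightarrow> j < ?m \<Longrightarrow> (w $$ (i,j) \<noteq> 0) = (i = \<rho> j)"
    using went Pent Dent d0 by auto
  have wM: "monomial_mat ?m w" and wc: "\<And>j. j < ?m \<Longrightarrow> cpm ?m w j = \<rho> j"
    using pattern_mono[OF wcar r wnz] by auto
  have detw: "det w = 1" unfolding w_def using det_mult[OF Pcar Dcar] det_multrow_mat[of n ?m d] dP
    unfolding D_def d_def by simp
  define \<tau> where "\<tau> = rpm ?m P"
  have tl: "\<And>i. i < ?m \<Longrightarrow> \<tau> i < ?m" unfolding \<tau>_def using rpm[OF PM] by auto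
  have rt: "\<And>i. i < ?m \<Longrightarrow> \<rho> (\<tau> i) = i" unfolding \<tau>_def using cpm_rpm[OF PM] Pc rpm[OF PM] by metis
  have tsym: "\<And>i. i < ?m \<Longrightarrow> \<tau> (2*n - i) = 2*n - \<tau> i"
  proof -
    fix i assume i: "i < ?m"
    have "\<rho> (2*n - \<tau> i) = 2*n - i" using rs[OF tl[OF i]] rt[OF i] by simp
    hence "\<rho> (2*n - \<tau> i) = \<rho> (\<tau> (2*n - i))" using rt[of "2*n - i"] by simp
    thus "\<tau> (2*n - i) = 2*n - \<tau> i" using rinj tl i by (metis diff_le_self le_imp_less_Suc Suc_eq_plus1 add.commute)
  qed
  have tn: "\<tau> n = n" using tsym[of n] by simp
  have tlt: "\<And>i. i < ?m \<Longrightarrow> (\<tau> i < n) = (i < n)"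
  proof -
    fix i assume i: "i < ?m"
    show "(\<tau> i < n) = (i < n)" using rn[OF tl[OF i]] rt[OF i] by simp
  qed
  have tbij: "bij_betw \<tau> {..<n} {..<n}"
  proof -
    have "inj_on \<tau> {..<n}"
    proof (rule inj_onI)
      fix i j assume ij: "i \<in> {..<n}" "j \<in> {..<n}" "\<tau> i = \<tau> j"
      have "i < ?m" "j < ?m" using ij by auto
      thus "i = j" using rt ij(3) by metis
    qed
    moreover have "\<tau> ` {..<n} \<subseteq> {..<n}" using tlt by auto
    ultimately show ?thesis unfolding bij_betw_def using endo_inj_surj[of "{..<n}" \<tau>] by auto
  qed
  have Pv: "\<And>u i. u \<in> carrier_vec ?m \<Longrightarrow> i < ?m \<Longrightarrow> (P *\<^sub>v u) $ i = u $ \<tau> i"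
  proof -
    fix u :: "'k vec" and i assume u: "u \<in> carrier_vec ?m" and i: "i < ?m"
    have "P $$ (i, \<tau> i) = 1" using P1[OF tl[OF i]] rt[OF i] by simp
    thus "(P *\<^sub>v u) $ i = u $ \<tau> i" using mult_vec[OF PM u i] unfolding \<tau>_def by simp
  qed
  have qP: "\<And>u. u \<in> carrier_vec ?m \<Longrightarrow> qform n (P *\<^sub>v u) = qform n u"
  proof -
    fix u :: "'k vec" assume u: "u \<in> carrier_vec ?m"
    have "(\<Sum>k<n. (P *\<^sub>v u) $ k * (P *\<^sub>v u) $ (2*n - k)) = (\<Sum>k<n. u $ \<tau> k * u $ (2*n - \<tau> k))"
      by (rule sum.cong, auto simp: Pv[OF u] tsym)
    also have "\<dots> = (\<Sum>k<n. u $ k * u $ (2*n - k))"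
      using sum.reindex_bij_betw[OF tbij, of "\<lambda>k. u $ k * u $ (2*n - k)"] by simp
    finally show "qform n (P *\<^sub>v u) = qform n u" unfolding qform_def using Pv[OF u, of n] tn by simp
  qed
  have qD: "\<And>u. u \<in> carrier_vec ?m \<Longrightarrow> qform n (D *\<^sub>v u) = qform n u"
  proof -
    fix u :: "'k vec" assume u: "u \<in> carrier_vec ?m"
    have Dv: "\<And>i. i < ?m \<Longrightarrow> (D *\<^sub>v u) $ i = (if i = n then d else 1) * u $ i"
      using mult_vec[OF DM u] Dr Dent by simp
    have "(\<Sum>k<n. (D *\<^sub>v u) $ k * (D *\<^sub>v u) $ (2*n - k)) = (\<Sum>k<n. u $ k * u $ (2*n - k))"
      by (rule sum.cong, auto simp: Dv)
    moreover have "(D *\<^sub>v u) $ n * (D *\<^sub>v u) $ n = u $ n * u $ n"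
      using Dv[of n] dP unfolding d_def by (simp add: algebra_simps)
    ultimately show "qform n (D *\<^sub>v u) = qform n u" unfolding qform_def by simp
  qed
  have "\<forall>v \<in> carrier_vec ?m. qform n (w *\<^sub>v v) = qform n v"
  proof
    fix v :: "'k vec" assume v: "v \<in> carrier_vec ?m"
    have "w *\<^sub>v v = P *\<^sub>v (D *\<^sub>v v)" unfolding w_def using Pcar Dcar v by simp
    thus "qform n (w *\<^sub>v v) = qform n v" using qP qD v Dcar by simp
  qed
  hence "w \<in> SOG n" unfolding SOG_def using wcar detw by blast
  thus ?thesis using wM wc by blast
qed



lemma rpm_sym: assumes w: "monomial_mat m w" and s: "\<And>i. i < m \<Longrightarrow> cpm m w (m - 1 - i) = m - 1 - cpm m w i"
  and i: "i < m" shows "rpm m w (m - 1 - i) = m - 1 - rpm m w i"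
proof -
  let ?j = "rpm m w i"
  have j: "?j < m" using rpm[OF w i] by simp
  have "cpm m w (m - 1 - ?j) = m - 1 - i" using s[OF j] cpm_rpm[OF w i] by simp
  hence "rpm m w (m - 1 - i) = rpm m w (cpm m w (m - 1 - ?j))" by simp
  also have "\<dots> = m - 1 - ?j" using rpm_cpm[OF w] j by simp
  finally show ?thesis .
qed

lemma main_generic:
  fixes G NN :: "'k::field mat set"
  assumes m: "m = 2*n \<or> m = 2*n+1"
  and G: "G \<subseteq> carrier_mat m m"
  and NN: "\<And>w. w \<in> NN \<Longrightarrow> monomial_mat m w \<and> (\<forall>A\<in>G. w * A * winv m w \<in> G \<and> winv m w * A * w \<in> G)
      \<and> (\<forall>i<m. cpm m w (m - 1 - i) = m - 1 - cpm m w i)"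
  and cons: "\<And>\<rho>. goodp m n \<rho> \<Longrightarrow> \<exists>w\<in>NN. \<forall>j<m. cpm m w j = \<rho> j"
  and x: "x \<in> NN" and x1: "x1 \<in> NN" and x2: "x2 \<in> NN"
  shows "\<exists>w\<in>NN. \<exists>k\<le>n. conj_set m x (conj_set m x1 (Lev G m (Sk m n r))) \<inter> conj_set m x2 (Lev G m (Sk m n s))
     = conj_set m w (Lev G m (Sk m n k))"
proof -
  have CL: "\<And>w S. w \<in> NN \<Longrightarrow> conj_set m w (Lev G m S) = Lev G m {i. i < m \<and> rpm m w i \<in> S}"
    by (rule conj_Lev[OF G], insert NN, auto)
  have SYM: "\<And>w S i. w \<in> NN \<Longrightarrow> (\<And>i. i < m \<Longrightarrow> (m - 1 - i \<in> S) = (i \<in> S)) \<Longrightarrow> i < m \<Longrightarrow>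
     (m - 1 - i \<in> {i. i < m \<and> rpm m w i \<in> S}) = (i \<in> {i. i < m \<and> rpm m w i \<in> S})"
  proof -
    fix w S i assume w: "w \<in> NN" and S: "\<And>i. i < m \<Longrightarrow> (m - 1 - i \<in> S) = (i \<in> S)" and i: "i < m"
    have wm: "monomial_mat m w" and ws: "\<And>i. i < m \<Longrightarrow> cpm m w (m - 1 - i) = m - 1 - cpm m w i" using NN[OF w] by auto
    have "rpm m w (m - 1 - i) = m - 1 - rpm m w i" by (rule rpm_sym[OF wm ws i])
    moreover have "rpm m w i < m" using rpm[OF wm i] by simp
    ultimately show "(m - 1 - i \<in> {i. i < m \<and> rpm m w i \<in> S}) = (i \<in> {i. i < m \<and> rpm m w i \<in> S})"
      using S[of "rpm m w i"] i by auto
  qed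
  have MID: "\<And>w. w \<in> NN \<Longrightarrow> m = 2*n+1 \<Longrightarrow> rpm m w n = n"
  proof -
    fix w assume w: "w \<in> NN" and mo: "m = 2*n+1"
    have wm: "monomial_mat m w" and ws: "\<And>i. i < m \<Longrightarrow> cpm m w (m - 1 - i) = m - 1 - cpm m w i" using NN[OF w] by auto
    have nm: "n < m" using mo by arith
    have "rpm m w (m - 1 - n) = m - 1 - rpm m w n" by (rule rpm_sym[OF wm ws nm])
    thus "rpm m w n = n" using mo by simp
  qed
  have Ssym: "\<And>r i. i < m \<Longrightarrow> (m - 1 - i \<in> Sk m n r) = (i \<in> Sk m n r)" unfolding Sk_def using m by auto
  have Smid: "\<And>r. m = 2*n+1 \<Longrightarrow> n \<in> Sk m n r" unfolding Sk_def by auto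
  define A1 where "A1 = {i. i < m \<and> rpm m x1 i \<in> Sk m n r}"
  define A2 where "A2 = {i. i < m \<and> rpm m x i \<in> A1}"
  define B where "B = {i. i < m \<and> rpm m x2 i \<in> Sk m n s}"
  define T where "T = A2 \<inter> B"
  have eq: "conj_set m x (conj_set m x1 (Lev G m (Sk m n r))) \<inter> conj_set m x2 (Lev G m (Sk m n s)) = Lev G m T"
    unfolding CL[OF x1] CL[OF x] CL[OF x2] T_def A2_def A1_def B_def Lev_inter ..
  have A1s: "\<And>i. i < m \<Longrightarrow> (m - 1 - i \<in> A1) = (i \<in> A1)" unfolding A1_def by (rule SYM[OF x1 Ssym])
  have A2s: "\<And>i. i < m \<Longrightarrow> (m - 1 - i \<in> A2) = (i \<in> A2)" unfolding A2_def by (rule SYM[OF x A1s])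
  have Bs: "\<And>i. i < m \<Longrightarrow> (m - 1 - i \<in> B) = (i \<in> B)" unfolding B_def by (rule SYM[OF x2 Ssym])
  have Ts: "\<And>i. i < m \<Longrightarrow> (m - 1 - i \<in> T) = (i \<in> T)" unfolding T_def using A2s Bs by blast
  have Tsub: "T \<subseteq> {..<m}" unfolding T_def B_def by auto
  have Tmid: "m = 2*n+1 \<Longrightarrow> n \<in> T"
  proof -
    assume mo: "m = 2*n+1"
    have "n \<in> A1" unfolding A1_def using MID[OF x1 mo] Smid[OF mo] mo by simp
    hence "n \<in> A2" unfolding A2_def using MID[OF x mo] mo by simp
    moreover have "n \<in> B" unfolding B_def using MID[OF x2 mo] Smid[OF mo] mo by simp
    ultimately show "n \<in> T" unfolding T_def by simp
  qed
  obtain k \<rho> where kn: "k \<le> n" and g: "goodp m n \<rho>" and kp: "\<forall>j<m. (j \<in> Sk m n k) = (\<rho> j \<in> T)"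
    using comb[OF m Tsub Ts Tmid] by blast
  obtain w where w: "w \<in> NN" and wc: "\<forall>j<m. cpm m w j = \<rho> j" using cons[OF g] by blast
  have wm: "monomial_mat m w" using NN[OF w] by auto
  have "{i. i < m \<and> rpm m w i \<in> Sk m n k} = T"
  proof (intro equalityI subsetI)
    fix i assume "i \<in> {i. i < m \<and> rpm m w i \<in> Sk m n k}"
    hence i: "i < m" and h: "rpm m w i \<in> Sk m n k" by auto
    have j: "rpm m w i < m" using rpm[OF wm i] by simp
    have "\<rho> (rpm m w i) = i" using wc j cpm_rpm[OF wm i] by simp
    thus "i \<in> T" using kp j h by metis
  next
    fix i assume iT: "i \<in> T"
    hence i: "i < m" using Tsub by auto
    have j: "rpm m w i < m" using rpm[OF wm i] by simp
    have "\<rho> (rpm m w i) = i" using wc j cpm_rpm[OF wm i] by simp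
    hence "rpm m w i \<in> Sk m n k" using kp j iT by metis
    thus "i \<in> {i. i < m \<and> rpm m w i \<in> Sk m n k}" using i by simp
  qed
  hence "conj_set m w (Lev G m (Sk m n k)) = Lev G m T" using CL[OF w] by simp
  thus ?thesis using eq w kn by metis
qed



lemma conj_transp_starf: "conj_transp q A = starf (\<lambda>a. a ^ q) A"
  unfolding conj_transp_def by (rule eq_matI, auto)

lemma fstar_pow: "q > 0 \<Longrightarrow> fstar (\<lambda>a::'k::field. a ^ q)"
  by unfold_locales (auto simp: power_mult_distrib)

lemma (in fstar) form_hyps:
  assumes J: "J \<in> carrier_mat m m"
  and Jnz': "\<forall>i<m. \<forall>j<m. (J $$ (i,j) \<noteq> 0) = (i + j = m - 1)"
  and Jinv': "\<forall>\<rho>. goodp m n \<rho> \<longrightarrow> (\<forall>a<m. \<forall>b<m. J $$ (\<rho> a, \<rho> b) = J $$ (a,b))"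
  shows "\<And>w. w \<in> {A \<in> FG J m. monomial_mat m A} \<Longrightarrow> monomial_mat m w \<and> (\<forall>A\<in>FG J m. w * A * winv m w \<in> FG J m \<and> winv m w * A * w \<in> FG J m)
      \<and> (\<forall>i<m. cpm m w (m - 1 - i) = m - 1 - cpm m w i)"
  and "\<And>\<rho>. goodp m n \<rho> \<Longrightarrow> \<exists>w\<in>{A \<in> FG J m. monomial_mat m A}. \<forall>j<m. cpm m w j = \<rho> j"
proof -
  have Jnz: "\<And>i j. i < m \<Longrightarrow> j < m \<Longrightarrow> (J $$ (i,j) \<noteq> 0) = (i + j = m - 1)" using Jnz' by blast
  have Jinv: "\<And>\<rho> a b. goodp m n \<rho> \<Longrightarrow> a < m \<Longrightarrow> b < m \<Longrightarrow> J $$ (\<rho> a, \<rho> b) = J $$ (a,b)" using Jinv' by blast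
  {
  fix w assume w: "w \<in> {A \<in> FG J m. monomial_mat m A}"
  hence wm: "monomial_mat m w" and wG: "w \<in> FG J m" by auto
  show "monomial_mat m w \<and> (\<forall>A\<in>FG J m. w * A * winv m w \<in> FG J m \<and> winv m w * A * w \<in> FG J m)
      \<and> (\<forall>i<m. cpm m w (m - 1 - i) = m - 1 - cpm m w i)"
    using wm FG_conj[OF J wm wG] FG_pair[OF J wm wG Jnz] by auto
  }
  {
  fix \<rho> assume g: "goodp m n \<rho>"
  have r: "bij_betw \<rho> {..<m} {..<m}" using g unfolding goodp_def by auto
  have "permat m \<rho> \<in> FG J m" by (rule permat_FG[OF J r Jinv[OF g]])
  thus "\<exists>w\<in>{A \<in> FG J m. monomial_mat m A}. \<forall>j<m. cpm m w j = \<rho> j"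
    using permat[OF r] by blast
  }
qed

lemma good_pair: assumes g: "goodp m n \<rho>" and ab: "a < m" "b < m"
  shows "(\<rho> a + \<rho> b = m - 1) = (a + b = m - 1)"
proof -
  have r: "bij_betw \<rho> {..<m} {..<m}" and rs: "\<And>i. i < m \<Longrightarrow> \<rho> (m - 1 - i) = m - 1 - \<rho> i"
    using g unfolding goodp_def by auto
  have rl: "\<And>j. j < m \<Longrightarrow> \<rho> j < m" using r unfolding bij_betw_def by auto
  have rinj: "\<And>i j. i < m \<Longrightarrow> j < m \<Longrightarrow> \<rho> i = \<rho> j \<Longrightarrow> i = j"
    using r unfolding bij_betw_def inj_on_def by auto
  show ?thesis
  proof
    assume "\<rho> a + \<rho> b = m - 1"
    hence "\<rho> b = \<rho> (m - 1 - a)" using rs[OF ab(1)] by simp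
    hence "b = m - 1 - a" using rinj ab by simp
    thus "a + b = m - 1" using ab by simp
  next
    assume "a + b = m - 1"
    hence "b = m - 1 - a" by simp
    hence "\<rho> b = m - 1 - \<rho> a" using rs[OF ab(1)] by simp
    thus "\<rho> a + \<rho> b = m - 1" using rl[OF ab(1)] by simp
  qed
qed

lemma antidiag_props: "antidiag_one m \<in> carrier_mat m m"
  "\<And>i j. i < m \<Longrightarrow> j < m \<Longrightarrow> (antidiag_one m $$ (i,j) \<noteq> (0::'k::field)) = (i + j = m - 1)"
  "\<And>\<rho> a b. goodp m n \<rho> \<Longrightarrow> a < m \<Longrightarrow> b < m \<Longrightarrow> (antidiag_one m :: 'k mat) $$ (\<rho> a, \<rho> b) = antidiag_one m $$ (a,b)"
proof -
  show "antidiag_one m \<in> carrier_mat m m" unfolding antidiag_one_def by simp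
  show "\<And>i j. i < m \<Longrightarrow> j < m \<Longrightarrow> (antidiag_one m $$ (i,j) \<noteq> (0::'k::field)) = (i + j = m - 1)"
    unfolding antidiag_one_def by simp
  fix \<rho> a b assume g: "goodp m n \<rho>" and ab: "a < m" "b < m"
  have rl: "\<And>j. j < m \<Longrightarrow> \<rho> j < m" using g unfolding goodp_def bij_betw_def by auto
  show "(antidiag_one m :: 'k mat) $$ (\<rho> a, \<rho> b) = antidiag_one m $$ (a,b)"
    unfolding antidiag_one_def using ab rl[OF ab(1)] rl[OF ab(2)] good_pair[OF g ab] by simp
qed

lemma symp_props: "symp_form n \<in> carrier_mat (2*n) (2*n)"
  "\<And>i j. i < 2*n \<Longrightarrow> j < 2*n \<Longrightarrow> (symp_form n $$ (i,j) \<noteq> (0::'k::field)) = (i + j = 2*n - 1)"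
  "\<And>\<rho> a b. goodp (2*n) n \<rho> \<Longrightarrow> a < 2*n \<Longrightarrow> b < 2*n \<Longrightarrow> (symp_form n :: 'k mat) $$ (\<rho> a, \<rho> b) = symp_form n $$ (a,b)"
proof -
  show "symp_form n \<in> carrier_mat (2*n) (2*n)" unfolding symp_form_def by simp
  show "\<And>i j. i < 2*n \<Longrightarrow> j < 2*n \<Longrightarrow> (symp_form n $$ (i,j) \<noteq> (0::'k::field)) = (i + j = 2*n - 1)"
    unfolding symp_form_def by simp
  fix \<rho> a b assume g: "goodp (2*n) n \<rho>" and ab: "a < 2*n" "b < 2*n"
  have rl: "\<And>j. j < 2*n \<Longrightarrow> \<rho> j < 2*n" and rn: "\<And>i. i < 2*n \<Longrightarrow> (\<rho> i < n) = (i < n)"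
    using g unfolding goodp_def bij_betw_def by auto
  show "(symp_form n :: 'k mat) $$ (\<rho> a, \<rho> b) = symp_form n $$ (a,b)"
    unfolding symp_form_def using ab rl[OF ab(1)] rl[OF ab(2)] good_pair[OF g ab] rn[OF ab(1)] by simp
qed

lemma antidiag_all: "\<forall>i<m. \<forall>j<m. (antidiag_one m $$ (i,j) \<noteq> (0::'k::field)) = (i + j = m - 1)"
  "\<forall>\<rho>. goodp m n \<rho> \<longrightarrow> (\<forall>a<m. \<forall>b<m. (antidiag_one m :: 'k mat) $$ (\<rho> a, \<rho> b) = antidiag_one m $$ (a,b))"
  using antidiag_props(2,3) by blast+

lemma symp_all: "\<forall>i<2*n. \<forall>j<2*n. (symp_form n $$ (i,j) \<noteq> (0::'k::field)) = (i + j = 2*n - 1)"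
  "\<forall>\<rho>. goodp (2*n) n \<rho> \<longrightarrow> (\<forall>a<2*n. \<forall>b<2*n. (symp_form n :: 'k mat) $$ (\<rho> a, \<rho> b) = symp_form n $$ (a,b))"
  using symp_props(2,3) by blast+

lemma type_hyps:
  fixes ty :: ctype and n q :: nat
  assumes q: "q > 0"
  defines "m \<equiv> cdim ty n"
  defines "G \<equiv> classical_group ty n q :: 'k::field mat set"
  shows "m = 2*n \<or> m = 2*n+1" "G \<subseteq> carrier_mat m m"
   "\<And>w :: 'k mat. w \<in> Ngrp ty n q \<Longrightarrow> monomial_mat m w \<and> (\<forall>A\<in>G. w * A * winv m w \<in> G \<and> winv m w * A * w \<in> G)
      \<and> (\<forall>i<m. cpm m w (m - 1 - i) = m - 1 - cpm m w i)"
   "\<And>\<rho>. goodp m n \<rho> \<Longrightarrow> \<exists>w\<in>(Ngrp ty n q :: 'k mat set). \<forall>j<m. cpm m w j = \<rho> j"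
proof -
  interpret fq: fstar "\<lambda>a::'k. a ^ q" by (rule fstar_pow[OF q])
  have GU: "\<And>k. {A \<in> carrier_mat k k. conj_transp q A * antidiag_one k * A = antidiag_one k} = fq.FG (antidiag_one k) k"
    unfolding fq.FG_def conj_transp_starf ..
  have Sp: "\<And>k. {A \<in> carrier_mat (2*k) (2*k). transpose_mat A * symp_form k * A = symp_form k} = fid.FG (symp_form k) (2*k)"
    unfolding fid.FG_def starf_id ..
  have NG: "(Ngrp ty n q :: 'k mat set) = {A \<in> G. monomial_mat m A}" unfolding Ngrp_def G_def m_def ..
  show "m = 2*n \<or> m = 2*n+1" unfolding m_def by (cases ty) auto
  show "G \<subseteq> carrier_mat m m" unfolding G_def m_def by (cases ty) auto
  show "\<And>w :: 'k mat. w \<in> Ngrp ty n q \<Longrightarrow> monomial_mat m w \<and> (\<forall>A\<in>G. w * A * winv m w \<in> G \<and> winv m w * A * w \<in> G)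
      \<and> (\<forall>i<m. cpm m w (m - 1 - i) = m - 1 - cpm m w i)"
  proof -
    fix w :: "'k mat" assume w: "w \<in> Ngrp ty n q"
    show "monomial_mat m w \<and> (\<forall>A\<in>G. w * A * winv m w \<in> G \<and> winv m w * A * w \<in> G)
      \<and> (\<forall>i<m. cpm m w (m - 1 - i) = m - 1 - cpm m w i)"
    proof (cases ty)
      case GU_even
      have e: "G = fq.FG (antidiag_one (2*n)) (2*n)" "m = 2*n" unfolding G_def m_def GU_even using GU by auto
      show ?thesis using w unfolding NG e
        by (rule fq.form_hyps(1)[OF antidiag_props(1) antidiag_all(1) antidiag_all(2)])
    next
      case GU_odd
      have e: "G = fq.FG (antidiag_one (2*n+1)) (2*n+1)" "m = 2*n+1" unfolding G_def m_def GU_odd using GU by auto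
      show ?thesis using w unfolding NG e
        by (rule fq.form_hyps(1)[OF antidiag_props(1) antidiag_all(1) antidiag_all(2)])
    next
      case Sp_even
      have e: "G = fid.FG (symp_form n) (2*n)" "m = 2*n" unfolding G_def m_def Sp_even using Sp by auto
      show ?thesis using w unfolding NG e
        by (rule fid.form_hyps(1)[OF symp_props(1) symp_all(1) symp_all(2)])
    next
      case SO_odd
      have e: "G = SOG n" "m = 2*n+1" unfolding G_def m_def SO_odd by (rule SOG_eq, simp)
      have wm: "monomial_mat (2*n+1) w" and wG: "w \<in> SOG n" using w unfolding NG e by auto
      have wi: "winv (2*n+1) w \<in> SOG n" by (rule SO_winv[OF wm wG])
      have cl: "\<forall>A\<in>SOG n. w * A * winv (2*n+1) w \<in> SOG n \<and> winv (2*n+1) w * A * w \<in> SOG n"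
        using SO_mult wG wi by blast
      have pr: "\<forall>i<2*n+1. cpm (2*n+1) w (2*n+1 - 1 - i) = 2*n+1 - 1 - cpm (2*n+1) w i"
        using SO_pair(2)[OF wm wG] by simp
      show ?thesis unfolding e using wm cl pr by blast
    qed
  qed
  show "\<And>\<rho>. goodp m n \<rho> \<Longrightarrow> \<exists>w\<in>(Ngrp ty n q :: 'k mat set). \<forall>j<m. cpm m w j = \<rho> j"
  proof -
    fix \<rho> assume g: "goodp m n \<rho>"
    show "\<exists>w\<in>(Ngrp ty n q :: 'k mat set). \<forall>j<m. cpm m w j = \<rho> j"
    proof (cases ty)
      case GU_even
      have e: "G = fq.FG (antidiag_one (2*n)) (2*n)" "m = 2*n" unfolding G_def m_def GU_even using GU by auto
      show ?thesis using g unfolding NG e by (rule fq.form_hyps(2)[OF antidiag_props(1) antidiag_all(1) antidiag_all(2)])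
    next
      case GU_odd
      have e: "G = fq.FG (antidiag_one (2*n+1)) (2*n+1)" "m = 2*n+1" unfolding G_def m_def GU_odd using GU by auto
      show ?thesis using g unfolding NG e by (rule fq.form_hyps(2)[OF antidiag_props(1) antidiag_all(1) antidiag_all(2)])
    next
      case Sp_even
      have e: "G = fid.FG (symp_form n) (2*n)" "m = 2*n" unfolding G_def m_def Sp_even using Sp by auto
      show ?thesis using g unfolding NG e by (rule fid.form_hyps(2)[OF symp_props(1) symp_all(1) symp_all(2)])
    next
      case SO_odd
      have e: "G = SOG n" "m = 2*n+1" unfolding G_def m_def SO_odd by (rule SOG_eq, simp)
      obtain w :: "'k mat" where "monomial_mat (2*n+1) w \<and> w \<in> SOG n \<and> (\<forall>j<2*n+1. cpm (2*n+1) w j = \<rho> j)"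
        using SO_cons[of n \<rho>] g unfolding e by blast
      thus ?thesis unfolding NG e by blast
    qed
  qed
qed



lemma notSk: "(i \<notin> Sk m n r \<or> j \<notin> Sk m n r) = (i < n - r \<or> j < n - r \<or> m - (n - r) \<le> i \<or> m - (n - r) \<le> j)"
  unfolding Sk_def by auto

lemma std_eq: "std_levi ty n q r = Lev (classical_group ty n q) (cdim ty n) (Sk (cdim ty n) n r)"
  unfolding std_levi_def Lev_def notSk ..

theorem proposition2p2:
  fixes ty :: ctype and n q p :: nat and L M :: "'k::{field,finite} mat set" and x :: "'k mat"
  assumes "prime p" and "\<exists>e\<ge>1. q = p ^ e" and "n \<ge> 1"
    and "card (UNIV :: 'k set) = (if ty = GU_even \<or> ty = GU_odd then q ^ 2 else q)"
    and "pure_levi ty n q L" and "pure_levi ty n q M"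
    and "x \<in> Ngrp ty n q"
  shows "pure_levi ty n q (conj_set (cdim ty n) x L \<inter> M)"
proof -
  have p0: "p > 0" using assms(1) prime_gt_0_nat by blast
  have q0: "q > 0" using assms(2) p0 by auto
  note TH = type_hyps[OF q0, where ty = ty and n = n]
  obtain x1 r where x1: "x1 \<in> Ngrp ty n q" and r: "r \<le> n"
    and L: "L = conj_set (cdim ty n) x1 (std_levi ty n q r)"
    using assms(5) unfolding pure_levi_def by blast
  obtain x2 s where x2: "x2 \<in> Ngrp ty n q" and s: "s \<le> n"
    and M: "M = conj_set (cdim ty n) x2 (std_levi ty n q s)"
    using assms(6) unfolding pure_levi_def by blast
  obtain w k where w: "w \<in> Ngrp ty n q" and k: "k \<le> n"
    and eq: "conj_set (cdim ty n) x (conj_set (cdim ty n) x1 (Lev (classical_group ty n q) (cdim ty n) (Sk (cdim ty n) n r)))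
      \<inter> conj_set (cdim ty n) x2 (Lev (classical_group ty n q) (cdim ty n) (Sk (cdim ty n) n s))
     = conj_set (cdim ty n) w (Lev (classical_group ty n q) (cdim ty n) (Sk (cdim ty n) n k))"
    using main_generic[OF TH(1) TH(2) TH(3) TH(4) assms(7) x1 x2, of r s] by blast
  have "conj_set (cdim ty n) x L \<inter> M = conj_set (cdim ty n) w (std_levi ty n q k)"
    unfolding L M std_eq using eq .
  thus ?thesis unfolding pure_levi_def using w k by blast
qed


end
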